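(* For every $\lambda>0$, \[ \lambda\,u(1_{S_{\mathrm u}},\lambda)\le\big(\mathfrak p_{i,j}(S_{\mathrm u})\big)_{(i,j)\in\mathcal{IJ}} \] (coordinatewise). Moreover, equality holds provided $\mathfrak p_{i,j}(S_{\mathrm u})=1$ for all $(i,j)\in\mathcal{IJ}$.
   Context: Let $S_1,\dots,S_N$ be disjoint compact metrizable separable spaces and $A_i$ generators of Feller semigroups (positive contraction semigroups, not necessarily conservative) on $C(S_i)$ with resolvents $R_{\lambda,i}=(\lambda-A_i)^{-1}$. Assume $A_1,\dots,A_M$ ($1\le M\le N$) are not conservative and the rest conservative. For $i\in\mathcal M=\{1,\dots,M\}$, assume the kernel of $A_i$ is trivial and there are continuous functions $\phi^{i,j}$, $j=1,\dots,\kappa(i)$, with $0\le\phi^{i,j}\le1_{S_i}$, $\lambda R_{\lambda,i}\phi^{i,j}\le\phi^{i,j}$ for all $\lambda>0$, $\lambda R_{\lambda,i}\phi^{i,j}\ne\phi^{i,j}$, and $\sum_{j=1}^{\kappa(i)}\phi^{i,j}=1_{S_i}$. Let $\ell^{i,j}_\lambda=\phi^{i,j}-\lambda R_{\lambda,i}\phi^{i,j}$, $\mathcal{IJ}=\{(i,j):i\in\mathcal M,1\le j\le\kappa(i)\}$, $\kappa=\sum_{i\in\mathcal M}\kappa(i)$. Let $S_{\mathrm u}$ be the disjoint union of the $S_i$ (functions on $S_i$ extended by zero; $f_i=f1_{S_i}$), $R^{\mathrm{du}}_\lambda f=\sum_{i=1}^NR_{\lambda,i}f_i$, and $\mathfrak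 p_{i,j}$, $(i,j)\in\mathcal{IJ}$, Borel sub-probability measures on $S_{\mathrm u}$. Let $N_\lambda:\mathbb R^\kappa\to\mathbb R^\kappa$, $(N_\lambda w)_{i,j}=\sum_{k\in\mathcal M}\sum_{l=1}^{\kappa(k)}w_{k,l}\int_{S_k}\ell^{k,l}_\lambda\,\mathrm d\mathfrak p_{i,j}$; $\|N_\lambda\|<1$ and $M_\lambda=I-N_\lambda$ is invertible. For $f\in C(S_{\mathrm u})$, $v(f,\lambda)=\big(\int_{S_{\mathrm u}}R^{\mathrm{du}}_\lambda f\,\mathrm d\mathfrak p_{i,j}\big)_{(i,j)\in\mathcal{IJ}}$ and $u(f,\lambda)=M_\lambda^{-1}v(f,\lambda)$, i.e. the unique solution of $u=v(f,\lambda)+N_\lambda u$. *)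

theory Defs
  imports "HOL-Probability.Probability"
begin

text \<open>C(S): continuous real functions on S, represented as functions on the ambient
  type that vanish outside S (the "extension by zero" convention of the paper).\<close>
definition Cfun :: "'a::topological_space set \<Rightarrow> ('a \<Rightarrow> real) set" where
  "Cfun S = {f. continuous_on S f \<and> (\<forall>x. x \<notin> S \<longrightarrow> f x = 0)}"

definition feller_semigroup ::
  "'a::topological_space set \<Rightarrow> (real \<Rightarrow> ('a \<Rightarrow> real) \<Rightarrow> ('a \<Rightarrow> real)) \<Rightarrow> bool" where
  "feller_semigroup S T \<longleftrightarrow>
     (\<forall>t\<ge>0. \<forall>f\<in>Cfun S. T t f \<in> Cfun S) \<and>
     (\<forall>t\<ge>0. \<forall>f\<in>Cfun S. \<forall>g\<in>Cfun S. \<forall>a b.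
        T t (\<lambda>x. a * f x + b * g x) = (\<lambda>x. a * T t f x + b * T t g x)) \<and>
     (\<forall>t\<ge>0. \<forall>f\<in>Cfun S. (\<forall>x\<in>S. 0 \<le> f x) \<longrightarrow> (\<forall>x\<in>S. 0 \<le> T t f x)) \<and>
     (\<forall>t\<ge>0. \<forall>f\<in>Cfun S. \<forall>c. (\<forall>x\<in>S. \<bar>f x\<bar> \<le> c) \<longrightarrow> (\<forall>x\<in>S. \<bar>T t f x\<bar> \<le> c)) \<and>
     (\<forall>f\<in>Cfun S. T 0 f = f) \<and>
     (\<forall>s\<ge>0. \<forall>t\<ge>0. \<forall>f\<in>Cfun S. T (s + t) f = T s (T t f)) \<and>
     (\<forall>f\<in>Cfun S. \<forall>e>0. \<exists>d>0. \<forall>t. 0 < t \<and> t < d \<longrightarrow> (\<forall>x\<in>S. \<bar>T t f x - f x\<bar> \<le> e))"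

definition unif_deriv0 ::
  "'a set \<Rightarrow> (real \<Rightarrow> ('a \<Rightarrow> real) \<Rightarrow> ('a \<Rightarrow> real)) \<Rightarrow> ('a \<Rightarrow> real) \<Rightarrow> ('a \<Rightarrow> real) \<Rightarrow> bool" where
  "unif_deriv0 S T f g \<longleftrightarrow>
     (\<forall>e>0. \<exists>d>0. \<forall>t. 0 < t \<and> t < d \<longrightarrow> (\<forall>x\<in>S. \<bar>(T t f x - f x) / t - g x\<bar> \<le> e))"

definition generates ::
  "'a::topological_space set \<Rightarrow> (real \<Rightarrow> ('a \<Rightarrow> real) \<Rightarrow> ('a \<Rightarrow> real))
     \<Rightarrow> (('a \<Rightarrow> real) \<Rightarrow> ('a \<Rightarrow> real)) \<Rightarrow> ('a \<Rightarrow> real) set \<Rightarrow> bool" where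
  "generates S T A D \<longleftrightarrow>
     D = {f \<in> Cfun S. \<exists>g\<in>Cfun S. unif_deriv0 S T f g} \<and>
     (\<forall>f\<in>D. A f \<in> Cfun S \<and> unif_deriv0 S T f (A f))"

definition feller_generator ::
  "'a::topological_space set \<Rightarrow> (('a \<Rightarrow> real) \<Rightarrow> ('a \<Rightarrow> real)) \<Rightarrow> ('a \<Rightarrow> real) set \<Rightarrow> bool" where
  "feller_generator S A D \<longleftrightarrow> (\<exists>T. feller_semigroup S T \<and> generates S T A D)"

definition conservative_generator ::
  "'a::topological_space set \<Rightarrow> (('a \<Rightarrow> real) \<Rightarrow> ('a \<Rightarrow> real)) \<Rightarrow> ('a \<Rightarrow> real) set \<Rightarrow> bool" where
  "conservative_generator S A D \<longleftrightarrow>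
     (\<exists>T. feller_semigroup S T \<and> generates S T A D \<and> (\<forall>t\<ge>0. T t (indicator S) = indicator S))"

definition resolvent ::
  "(('a \<Rightarrow> real) \<Rightarrow> ('a \<Rightarrow> real)) \<Rightarrow> ('a \<Rightarrow> real) set \<Rightarrow> real \<Rightarrow> ('a \<Rightarrow> real) \<Rightarrow> ('a \<Rightarrow> real)" where
  "resolvent A D lam f = (THE g. g \<in> D \<and> (\<lambda>x. lam * g x - A g x) = f)"

definition IJ :: "nat \<Rightarrow> (nat \<Rightarrow> nat) \<Rightarrow> (nat \<times> nat) set" where
  "IJ M \<kappa> = {(i, j). i \<in> {1..M} \<and> j \<in> {1..\<kappa> i}}"

definition ell ::
  "(nat \<Rightarrow> ('a \<Rightarrow> real) \<Rightarrow> ('a \<Rightarrow> real)) \<Rightarrow> (nat \<Rightarrow> ('a \<Rightarrow> real) set)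
     \<Rightarrow> (nat \<Rightarrow> nat \<Rightarrow> 'a \<Rightarrow> real) \<Rightarrow> nat \<Rightarrow> nat \<Rightarrow> real \<Rightarrow> 'a \<Rightarrow> real" where
  "ell A D \<phi> i j lam = (\<lambda>x. \<phi> i j x - lam * resolvent (A i) (D i) lam (\<phi> i j) x)"

definition Nop ::
  "(nat \<Rightarrow> 'a::topological_space set) \<Rightarrow> (nat \<Rightarrow> ('a \<Rightarrow> real) \<Rightarrow> ('a \<Rightarrow> real)) \<Rightarrow> (nat \<Rightarrow> ('a \<Rightarrow> real) set)
     \<Rightarrow> nat \<Rightarrow> (nat \<Rightarrow> nat) \<Rightarrow> (nat \<Rightarrow> nat \<Rightarrow> 'a \<Rightarrow> real) \<Rightarrow> (nat \<times> nat \<Rightarrow> 'a measure)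
     \<Rightarrow> real \<Rightarrow> (nat \<times> nat \<Rightarrow> real) \<Rightarrow> (nat \<times> nat \<Rightarrow> real)" where
  "Nop S A D M \<kappa> \<phi> p lam w = (\<lambda>ij. if ij \<in> IJ M \<kappa> then
      (\<Sum>k\<in>{1..M}. \<Sum>l\<in>{1..\<kappa> k}. w (k, l) * (LINT x:S k|p ij. ell A D \<phi> k l lam x))
    else 0)"

definition Rdu ::
  "(nat \<Rightarrow> 'a set) \<Rightarrow> (nat \<Rightarrow> ('a \<Rightarrow> real) \<Rightarrow> ('a \<Rightarrow> real)) \<Rightarrow> (nat \<Rightarrow> ('a \<Rightarrow> real) set)
     \<Rightarrow> nat \<Rightarrow> real \<Rightarrow> ('a \<Rightarrow> real) \<Rightarrow> 'a \<Rightarrow> real" where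
  "Rdu S A D Nn lam f = (\<lambda>x. \<Sum>i\<in>{1..Nn}. resolvent (A i) (D i) lam (\<lambda>y. indicator (S i) y * f y) x)"

definition vvec ::
  "(nat \<Rightarrow> 'a::topological_space set) \<Rightarrow> (nat \<Rightarrow> ('a \<Rightarrow> real) \<Rightarrow> ('a \<Rightarrow> real)) \<Rightarrow> (nat \<Rightarrow> ('a \<Rightarrow> real) set)
     \<Rightarrow> nat \<Rightarrow> nat \<Rightarrow> (nat \<Rightarrow> nat) \<Rightarrow> (nat \<times> nat \<Rightarrow> 'a measure)
     \<Rightarrow> ('a \<Rightarrow> real) \<Rightarrow> real \<Rightarrow> (nat \<times> nat \<Rightarrow> real)" where
  "vvec S A D Nn M \<kappa> p f lam = (\<lambda>ij. if ij \<in> IJ M \<kappa> then integral\<^sup>L (p ij) (Rdu S A D Nn lam f) else 0)"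

definition uvec ::
  "(nat \<Rightarrow> 'a::topological_space set) \<Rightarrow> (nat \<Rightarrow> ('a \<Rightarrow> real) \<Rightarrow> ('a \<Rightarrow> real)) \<Rightarrow> (nat \<Rightarrow> ('a \<Rightarrow> real) set)
     \<Rightarrow> nat \<Rightarrow> nat \<Rightarrow> (nat \<Rightarrow> nat) \<Rightarrow> (nat \<Rightarrow> nat \<Rightarrow> 'a \<Rightarrow> real) \<Rightarrow> (nat \<times> nat \<Rightarrow> 'a measure)
     \<Rightarrow> ('a \<Rightarrow> real) \<Rightarrow> real \<Rightarrow> (nat \<times> nat \<Rightarrow> real)" where
  "uvec S A D Nn M \<kappa> \<phi> p f lam = (THE u. (\<forall>ij. ij \<notin> IJ M \<kappa> \<longrightarrow> u ij = 0) \<and>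
      (\<forall>ij\<in>IJ M \<kappa>. u ij = vvec S A D Nn M \<kappa> p f lam ij + Nop S A D M \<kappa> \<phi> p lam u ij))"

definition supnorm_on :: "(nat \<times> nat) set \<Rightarrow> (nat \<times> nat \<Rightarrow> real) \<Rightarrow> real" where
  "supnorm_on I w = Max (insert 0 ((\<lambda>ij. \<bar>w ij\<bar>) ` I))"

end

theory Submission
  imports Defs
begin


lemma small_zero: fixes a :: real assumes "\<And>e. e > 0 \<Longrightarrow> \<bar>a\<bar> \<le> e" shows "a = 0"
proof (rule ccontr)
  assume "a \<noteq> 0" then have "\<bar>a\<bar> > 0" by simp
  from assms[of "\<bar>a\<bar>/2"] this show False by simp
qed

lemma Cfun_zero: "(\<lambda>x. 0) \<in> Cfun S"
  by (simp add: Cfun_def)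

lemma Cfun_lin: "f \<in> Cfun S \<Longrightarrow> g \<in> Cfun S \<Longrightarrow> (\<lambda>x. a * f x + b * g x) \<in> Cfun S"
  by (auto simp: Cfun_def intro!: continuous_intros)

lemma Cfun_sum: "finite I \<Longrightarrow> (\<forall>i\<in>I. f i \<in> Cfun S) \<Longrightarrow> (\<lambda>x. \<Sum>i\<in>I. f i x) \<in> Cfun S"
  by (auto simp: Cfun_def intro!: continuous_intros)

lemma Cfun_indicator: "(indicator S :: 'a::topological_space \<Rightarrow> real) \<in> Cfun S"
proof -
  have "continuous_on S (indicator S :: 'a \<Rightarrow> real) = continuous_on S (\<lambda>x. 1::real)"
    by (rule continuous_on_cong) auto
  then have "continuous_on S (indicator S :: 'a \<Rightarrow> real)" by simp
  then show ?thesis by (auto simp: Cfun_def)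
qed

context
  fixes S :: "'a::metric_space set" and T :: "real \<Rightarrow> ('a \<Rightarrow> real) \<Rightarrow> ('a \<Rightarrow> real)"
  assumes fs: "feller_semigroup S T"
begin

lemma T_Cfun: "t \<ge> 0 \<Longrightarrow> f \<in> Cfun S \<Longrightarrow> T t f \<in> Cfun S"
  using fs by (simp add: feller_semigroup_def)

lemma T_lin: "t \<ge> 0 \<Longrightarrow> f \<in> Cfun S \<Longrightarrow> g \<in> Cfun S \<Longrightarrow>
  T t (\<lambda>x. a * f x + b * g x) = (\<lambda>x. a * T t f x + b * T t g x)"
  using fs by (simp add: feller_semigroup_def)

lemma T_diff: "t \<ge> 0 \<Longrightarrow> f \<in> Cfun S \<Longrightarrow> g \<in> Cfun S \<Longrightarrow>
  T t (\<lambda>x. f x - g x) = (\<lambda>x. T t f x - T t g x)"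
  using T_lin[of t f g 1 "-1"] by simp

lemma T_add: "t \<ge> 0 \<Longrightarrow> f \<in> Cfun S \<Longrightarrow> g \<in> Cfun S \<Longrightarrow>
  T t (\<lambda>x. f x + g x) = (\<lambda>x. T t f x + T t g x)"
  using T_lin[of t f g 1 1] by simp

lemma T_scale: "t \<ge> 0 \<Longrightarrow> f \<in> Cfun S \<Longrightarrow> T t (\<lambda>x. c * f x) = (\<lambda>x. c * T t f x)"
  using T_lin[of t f f c 0] by simp

lemma T_zero: "t \<ge> 0 \<Longrightarrow> T t (\<lambda>x. 0) = (\<lambda>x. 0)"
  using T_lin[of t "\<lambda>x. 0" "\<lambda>x. 0" 0 0] Cfun_zero[of S] by simp

lemma T_contr: "t \<ge> 0 \<Longrightarrow> f \<in> Cfun S \<Longrightarrow> (\<forall>x\<in>S. \<bar>f x\<bar> \<le> c) \<Longrightarrow> x \<in> S \<Longrightarrow> \<bar>T t f x\<bar> \<le> c"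
  using fs by (simp add: feller_semigroup_def)

lemma T_out: "t \<ge> 0 \<Longrightarrow> f \<in> Cfun S \<Longrightarrow> x \<notin> S \<Longrightarrow> T t f x = 0"
  using T_Cfun by (auto simp: Cfun_def)

lemma T_contr_all: "t \<ge> 0 \<Longrightarrow> f \<in> Cfun S \<Longrightarrow> (\<forall>x\<in>S. \<bar>f x\<bar> \<le> c) \<Longrightarrow> 0 \<le> c \<Longrightarrow> \<bar>T t f x\<bar> \<le> c"
  using T_contr T_out by (cases "x \<in> S") auto

lemma T_0: "f \<in> Cfun S \<Longrightarrow> T 0 f = f"
  using fs by (simp add: feller_semigroup_def)

lemma T_semi: "s \<ge> 0 \<Longrightarrow> t \<ge> 0 \<Longrightarrow> f \<in> Cfun S \<Longrightarrow> T (s + t) f = T s (T t f)"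
  using fs by (simp add: feller_semigroup_def)

lemma T_strong: "f \<in> Cfun S \<Longrightarrow> e > 0 \<Longrightarrow> \<exists>d>0. \<forall>t. 0 < t \<and> t < d \<longrightarrow> (\<forall>x\<in>S. \<bar>T t f x - f x\<bar> \<le> e)"
  using fs by (simp add: feller_semigroup_def)

lemma T_sum: assumes "t \<ge> 0" shows "finite I \<Longrightarrow> (\<forall>i\<in>I. f i \<in> Cfun S) \<Longrightarrow>
  T t (\<lambda>x. \<Sum>i\<in>I. f i x) = (\<lambda>x. \<Sum>i\<in>I. T t (f i) x)"
proof (induction I rule: finite_induct)
  case empty then show ?case using T_zero assms by simp
next
  case (insert i I)
  have "T t (\<lambda>x. \<Sum>i\<in>insert i I. f i x) = T t (\<lambda>x. f i x + (\<Sum>i\<in>I. f i x))"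
    using insert by simp
  also have "\<dots> = (\<lambda>x. T t (f i) x + T t (\<lambda>x. \<Sum>i\<in>I. f i x) x)"
    using T_add[of t "f i" "\<lambda>x. \<Sum>i\<in>I. f i x"] insert Cfun_sum[of I f S] assms by simp
  finally show ?case using insert by simp
qed

lemma deriv_unique:
  assumes "unif_deriv0 S T f g1" "unif_deriv0 S T f g2" "x \<in> S"
  shows "g1 x = g2 x"
proof -
  have "\<bar>g1 x - g2 x\<bar> \<le> e" if "e > 0" for e
  proof -
    obtain d1 where d1: "d1 > 0" "\<forall>t. 0 < t \<and> t < d1 \<longrightarrow> (\<forall>x\<in>S. \<bar>(T t f x - f x) / t - g1 x\<bar> \<le> e/2)"
      using assms(1) \<open>e>0\<close> unfolding unif_deriv0_def by (meson half_gt_zero)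
    obtain d2 where d2: "d2 > 0" "\<forall>t. 0 < t \<and> t < d2 \<longrightarrow> (\<forall>x\<in>S. \<bar>(T t f x - f x) / t - g2 x\<bar> \<le> e/2)"
      using assms(2) \<open>e>0\<close> unfolding unif_deriv0_def by (meson half_gt_zero)
    define t where "t = min d1 d2 / 2"
    have "0 < t" "t < d1" "t < d2" using d1 d2 by (auto simp: t_def)
    then have "\<bar>(T t f x - f x) / t - g1 x\<bar> \<le> e/2" "\<bar>(T t f x - f x) / t - g2 x\<bar> \<le> e/2"
      using d1 d2 assms(3) by auto
    then show ?thesis by linarith
  qed
  then show ?thesis using small_zero[of "g1 x - g2 x"] by simp
qed

lemma deriv_lin:
  assumes "f1 \<in> Cfun S" "f2 \<in> Cfun S" "unif_deriv0 S T f1 g1" "unif_deriv0 S T f2 g2"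
  shows "unif_deriv0 S T (\<lambda>x. a * f1 x + b * f2 x) (\<lambda>x. a * g1 x + b * g2 x)"
  unfolding unif_deriv0_def
proof (intro allI impI)
  fix e :: real assume "e > 0"
  define e' where "e' = e / (\<bar>a\<bar> + \<bar>b\<bar> + 1)"
  have "e' > 0" using \<open>e>0\<close> by (simp add: e'_def add_pos_nonneg)
  obtain d1 where d1: "d1 > 0" "\<forall>t. 0 < t \<and> t < d1 \<longrightarrow> (\<forall>x\<in>S. \<bar>(T t f1 x - f1 x) / t - g1 x\<bar> \<le> e')"
    using assms(3) \<open>e'>0\<close> unfolding unif_deriv0_def by blast
  obtain d2 where d2: "d2 > 0" "\<forall>t. 0 < t \<and> t < d2 \<longrightarrow> (\<forall>x\<in>S. \<bar>(T t f2 x - f2 x) / t - g2 x\<bar> \<le> e')"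
    using assms(4) \<open>e'>0\<close> unfolding unif_deriv0_def by blast
  show "\<exists>d>0. \<forall>t. 0 < t \<and> t < d \<longrightarrow> (\<forall>x\<in>S. \<bar>(T t (\<lambda>x. a * f1 x + b * f2 x) x - (a * f1 x + b * f2 x)) / t - (a * g1 x + b * g2 x)\<bar> \<le> e)"
  proof (intro exI[of _ "min d1 d2"] conjI allI impI ballI)
    show "min d1 d2 > 0" using d1 d2 by simp
    fix t x assume t: "0 < t \<and> t < min d1 d2" and x: "x \<in> S"
    define q1 where "q1 = (T t f1 x - f1 x) / t - g1 x"
    define q2 where "q2 = (T t f2 x - f2 x) / t - g2 x"
    have q1: "\<bar>q1\<bar> \<le> e'" using d1 t x by (auto simp: q1_def)
    have q2: "\<bar>q2\<bar> \<le> e'" using d2 t x by (auto simp: q2_def)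
    have eq: "(T t (\<lambda>x. a * f1 x + b * f2 x) x - (a * f1 x + b * f2 x)) / t - (a * g1 x + b * g2 x) = a * q1 + b * q2"
      using T_lin[of t f1 f2 a b] assms t by (simp add: q1_def q2_def field_simps)
    have "\<bar>a * q1 + b * q2\<bar> \<le> \<bar>a * q1\<bar> + \<bar>b * q2\<bar>" by (rule abs_triangle_ineq)
    also have "\<dots> = \<bar>a\<bar> * \<bar>q1\<bar> + \<bar>b\<bar> * \<bar>q2\<bar>" by (simp add: abs_mult)
    also have "\<dots> \<le> \<bar>a\<bar> * e' + \<bar>b\<bar> * e'"
      using q1 q2 by (intro add_mono mult_left_mono) auto
    also have "\<dots> \<le> e"
    proof -
      have "(\<bar>a\<bar> + \<bar>b\<bar>) * e' \<le> (\<bar>a\<bar> + \<bar>b\<bar> + 1) * e'" using \<open>e'>0\<close> by simp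
      also have "\<dots> = e" by (simp add: e'_def add_pos_nonneg)
      finally show ?thesis by (simp add: algebra_simps)
    qed
    finally show "\<bar>(T t (\<lambda>x. a * f1 x + b * f2 x) x - (a * f1 x + b * f2 x)) / t - (a * g1 x + b * g2 x)\<bar> \<le> e"
      using eq by simp
  qed
qed

end



context
  fixes S :: "'a::metric_space set" and T :: "real \<Rightarrow> ('a \<Rightarrow> real) \<Rightarrow> ('a \<Rightarrow> real)"
    and A :: "('a \<Rightarrow> real) \<Rightarrow> ('a \<Rightarrow> real)" and D :: "('a \<Rightarrow> real) set"
  assumes fs: "feller_semigroup S T" and gen: "generates S T A D"
begin

lemma D_Cfun: "f \<in> D \<Longrightarrow> f \<in> Cfun S"
  using gen by (auto simp: generates_def)

lemma A_Cfun: "f \<in> D \<Longrightarrow> A f \<in> Cfun S"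
  using gen by (auto simp: generates_def)

lemma A_deriv: "f \<in> D \<Longrightarrow> unif_deriv0 S T f (A f)"
  using gen by (auto simp: generates_def)

lemma D_intro:
  assumes "f \<in> Cfun S" "g \<in> Cfun S" "unif_deriv0 S T f g"
  shows "f \<in> D \<and> A f = g"
proof -
  have fD: "f \<in> D" using gen assms by (auto simp: generates_def)
  have "A f x = g x" for x
  proof (cases "x \<in> S")
    case True
    then show ?thesis using deriv_unique[OF fs A_deriv[OF fD] assms(3)] by simp
  next
    case False
    then show ?thesis using A_Cfun[OF fD] assms(2) by (auto simp: Cfun_def)
  qed
  then show ?thesis using fD by auto
qed

lemma D_lin:
  assumes "f1 \<in> D" "f2 \<in> D"
  shows "(\<lambda>x. a * f1 x + b * f2 x) \<in> D \<and> A (\<lambda>x. a * f1 x + b * f2 x) = (\<lambda>x. a * A f1 x + b * A f2 x)"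
  using D_intro[OF Cfun_lin[OF D_Cfun[OF assms(1)] D_Cfun[OF assms(2)]]
      Cfun_lin[OF A_Cfun[OF assms(1)] A_Cfun[OF assms(2)]]
      deriv_lin[OF fs D_Cfun[OF assms(1)] D_Cfun[OF assms(2)] A_deriv[OF assms(1)] A_deriv[OF assms(2)]]] .

lemma D_zero: "(\<lambda>x. 0) \<in> D \<and> A (\<lambda>x. 0) = (\<lambda>x. 0)"
proof (rule D_intro[OF Cfun_zero Cfun_zero])
  show "unif_deriv0 S T (\<lambda>x. 0) (\<lambda>x. 0)"
    unfolding unif_deriv0_def using T_zero[OF fs] by (auto intro: exI[of _ 1])
qed

lemma D_sum:
  shows "finite I \<Longrightarrow> (\<forall>i\<in>I. f i \<in> D) \<Longrightarrow>
    (\<lambda>x. \<Sum>i\<in>I. f i x) \<in> D \<and> A (\<lambda>x. \<Sum>i\<in>I. f i x) = (\<lambda>x. \<Sum>i\<in>I. A (f i) x)"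
proof (induction I rule: finite_induct)
  case empty then show ?case using D_zero by simp
next
  case (insert i I)
  have e: "(\<lambda>x. \<Sum>i\<in>insert i I. f i x) = (\<lambda>x. 1 * f i x + 1 * (\<Sum>i\<in>I. f i x))"
    using insert by simp
  have "(\<lambda>x. \<Sum>i\<in>I. f i x) \<in> D" "A (\<lambda>x. \<Sum>i\<in>I. f i x) = (\<lambda>x. \<Sum>i\<in>I. A (f i) x)"
    using insert by auto
  then show ?case using D_lin[of "f i" "\<lambda>x. \<Sum>i\<in>I. f i x" 1 1] insert e by simp
qed

lemma dissipative:
  assumes "compact S" "lam > 0" "f \<in> D" "\<forall>x\<in>S. lam * f x - A f x = 0"
  shows "f = (\<lambda>x. 0)"
proof (rule ccontr)
  assume "f \<noteq> (\<lambda>x. 0)"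
  then obtain x1 where "f x1 \<noteq> 0" by auto
  have fC: "f \<in> Cfun S" using D_Cfun assms by auto
  then have "x1 \<in> S" using \<open>f x1 \<noteq> 0\<close> by (auto simp: Cfun_def)
  then have "S \<noteq> {}" by auto
  have "continuous_on S (\<lambda>x. \<bar>f x\<bar>)" using fC by (auto simp: Cfun_def intro!: continuous_intros)
  then obtain x0 where x0: "x0 \<in> S" "\<forall>y\<in>S. \<bar>f y\<bar> \<le> \<bar>f x0\<bar>"
    using continuous_attains_sup[OF assms(1) \<open>S \<noteq> {}\<close>] by blast
  define m where "m = \<bar>f x0\<bar>"
  have "m > 0" using x0 \<open>x1 \<in> S\<close> \<open>f x1 \<noteq> 0\<close> unfolding m_def by force
  have Af: "A f x0 = lam * f x0" using assms(4) x0 by auto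
  have "lam * m / 2 > 0" using \<open>m>0\<close> assms(2) by simp
  then obtain d where d: "d > 0" "\<forall>t. 0 < t \<and> t < d \<longrightarrow> (\<forall>x\<in>S. \<bar>(T t f x - f x) / t - A f x\<bar> \<le> lam * m / 2)"
    using A_deriv[OF assms(3)] unfolding unif_deriv0_def by blast
  define t where "t = d / 2"
  have t: "0 < t" "t < d" using d by (auto simp: t_def)
  define q where "q = (T t f x0 - f x0) / t"
  have "\<bar>(T t f x0 - f x0) / t - A f x0\<bar> \<le> lam * m / 2" using d t x0 by blast
  then have q1: "\<bar>q - lam * f x0\<bar> \<le> lam * m / 2" using Af by (simp add: q_def)
  have Tb: "\<bar>T t f x0\<bar> \<le> m" using T_contr[OF fs _ fC, of t m x0] t x0 by (auto simp: m_def)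
  have "f x0 * T t f x0 \<le> \<bar>f x0\<bar> * \<bar>T t f x0\<bar>" by (metis abs_ge_self abs_mult)
  also have "\<dots> \<le> m * m" using Tb unfolding m_def by (intro mult_left_mono) auto
  finally have "f x0 * (T t f x0 - f x0) \<le> 0" by (simp add: m_def algebra_simps abs_mult_self_eq)
  then have fq: "f x0 * q \<le> 0" using t by (simp add: q_def divide_nonpos_pos)
  have "f x0 * (q - lam * f x0) = f x0 * q - lam * (m * m)" by (simp add: m_def algebra_simps abs_mult_self_eq)
  also have "\<dots> \<le> - lam * (m * m)" using fq by simp
  finally have "lam * (m * m) \<le> - (f x0 * (q - lam * f x0))" by simp
  also have "\<dots> \<le> \<bar>f x0\<bar> * \<bar>q - lam * f x0\<bar>" by (metis abs_ge_minus_self abs_mult)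
  also have "\<dots> \<le> m * (lam * m / 2)" using q1 unfolding m_def by (intro mult_left_mono) auto
  finally have "lam * (m * m) \<le> lam * (m * m) / 2" by simp
  moreover have "lam * (m * m) > 0" using \<open>m>0\<close> assms(2) by simp
  ultimately show False by simp
qed

lemma resolvent_eq:
  assumes "compact S" "lam > 0" "g \<in> D" "(\<lambda>x. lam * g x - A g x) = \<phi>"
  shows "resolvent A D lam \<phi> = g"
  unfolding resolvent_def
proof (rule the_equality)
  show "g \<in> D \<and> (\<lambda>x. lam * g x - A g x) = \<phi>" using assms by simp
  fix g' assume g': "g' \<in> D \<and> (\<lambda>x. lam * g' x - A g' x) = \<phi>"
  define h where "h = (\<lambda>x. 1 * g' x + (-1) * g x)"
  have h: "h \<in> D" "A h = (\<lambda>x. 1 * A g' x + (-1) * A g x)"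
    using D_lin[of g' g 1 "-1"] g' assms(3) by (auto simp: h_def)
  have "\<forall>x\<in>S. lam * h x - A h x = 0"
  proof
    fix x
    have "lam * g' x - A g' x = \<phi> x" "lam * g x - A g x = \<phi> x"
      using g' assms(4) by (auto dest: fun_cong[of _ _ x])
    then show "lam * h x - A h x = 0" using h(2) by (simp add: h_def algebra_simps)
  qed
  then have "h = (\<lambda>x. 0)" using dissipative[OF assms(1,2) h(1)] by simp
  then show "g' = g" by (auto simp: h_def fun_eq_iff dest: fun_cong)
qed

end

lemma resolvent_conservative:
  fixes S :: "'a::metric_space set"
  assumes "compact S" "lam > 0" "conservative_generator S A D"
  shows "resolvent A D lam (indicator S) = (\<lambda>x. (1/lam) * indicator S x)"
proof -
  obtain T where fs: "feller_semigroup S T" and gen: "generates S T A D"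
    and pres: "\<forall>t\<ge>0. T t (indicator S) = indicator S"
    using assms(3) unfolding conservative_generator_def by blast
  define g where "g = (\<lambda>x. (1/lam) * (indicator S x :: real))"
  have gC: "g \<in> Cfun S" unfolding g_def
    using Cfun_lin[of "indicator S" S "indicator S" "1/lam" 0] Cfun_indicator[of S] by simp
  have Tg: "T t g = g" if "t > 0" for t
    using T_scale[OF fs, of t "indicator S" "1/lam"] pres Cfun_indicator[of S] that by (simp add: g_def)
  have "unif_deriv0 S T g (\<lambda>x. 0)"
    unfolding unif_deriv0_def using Tg by (auto intro: exI[of _ 1])
  then have gD: "g \<in> D" "A g = (\<lambda>x. 0)" using D_intro[OF fs gen gC Cfun_zero] by auto
  have "(\<lambda>x. lam * g x - A g x) = indicator S" using gD(2) assms(2) by (simp add: g_def fun_eq_iff)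
  then show ?thesis using resolvent_eq[OF fs gen assms(1,2) gD(1)] by (simp add: g_def)
qed



lemma Cfun_scale: "f \<in> Cfun S \<Longrightarrow> (\<lambda>x. c * f x) \<in> Cfun S"
  using Cfun_lin[of f S f c 0] by simp

lemma Cfun_bounded:
  assumes "compact S" "f \<in> Cfun S"
  shows "\<exists>B\<ge>0. \<forall>x. \<bar>f x\<bar> \<le> B"
proof -
  have "compact (f ` S)" using assms by (intro compact_continuous_image) (auto simp: Cfun_def)
  then obtain B where B: "\<forall>y\<in>f ` S. norm y \<le> B" using compact_imp_bounded bounded_iff by metis
  show ?thesis
  proof (intro exI[of _ "max B 0"] conjI allI)
    fix x show "\<bar>f x\<bar> \<le> max B 0"
      using B assms(2) by (cases "x \<in> S") (auto simp: Cfun_def)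
  qed simp
qed

lemma Cfun_uniform:
  fixes S :: "'a::metric_space set"
  assumes "\<And>e. e > 0 \<Longrightarrow> \<exists>f\<in>Cfun S. \<forall>x. \<bar>g x - f x\<bar> \<le> e"
  shows "g \<in> Cfun S"
proof -
  have out: "g x = 0" if "x \<notin> S" for x
  proof (rule small_zero)
    fix e :: real assume "e > 0"
    then obtain f where f: "f \<in> Cfun S" "\<forall>x. \<bar>g x - f x\<bar> \<le> e" using assms by blast
    have "f x = 0" using f(1) that by (simp add: Cfun_def)
    moreover have "\<bar>g x - f x\<bar> \<le> e" using f(2) by blast
    ultimately show "\<bar>g x\<bar> \<le> e" by simp
  qed
  have "continuous_on S g"
    unfolding Elementary_Metric_Spaces.continuous_on_iff
  proof (intro ballI allI impI)
    fix x e assume x: "x \<in> S" and e: "(e::real) > 0"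
    obtain f where f: "f \<in> Cfun S" "\<forall>x. \<bar>g x - f x\<bar> \<le> e/3" using assms[of "e/3"] e by auto
    have fc: "continuous_on S f" using f by (auto simp: Cfun_def)
    have e3: "e/3 > 0" using e by simp
    obtain d where d: "d > 0" "\<forall>x'\<in>S. dist x' x < d \<longrightarrow> dist (f x') (f x) < e/3"
      using fc[unfolded Elementary_Metric_Spaces.continuous_on_iff, rule_format, OF x e3] by blast
    show "\<exists>d>0. \<forall>x'\<in>S. dist x' x < d \<longrightarrow> dist (g x') (g x) < e"
    proof (intro exI[of _ d] conjI ballI impI)
      fix x' assume "x' \<in> S" "dist x' x < d"
      then have "\<bar>f x' - f x\<bar> < e/3" using d by (auto simp: dist_real_def)
      moreover have "\<bar>g x' - f x'\<bar> \<le> e/3" "\<bar>g x - f x\<bar> \<le> e/3" using f by auto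
      ultimately show "dist (g x') (g x) < e" unfolding dist_real_def by arith
    qed (use d in auto)
  qed
  then show ?thesis using out by (auto simp: Cfun_def)
qed

lemma riemann_bound:
  fixes F :: "real \<Rightarrow> real" and n :: nat
  assumes ab: "a \<le> b" and cont: "continuous_on {a..b} F" and n: "n > 0"
    and mod: "\<forall>s\<in>{a..b}. \<forall>t\<in>{a..b}. \<bar>s - t\<bar> \<le> (b-a)/n \<longrightarrow> \<bar>F s - F t\<bar> \<le> e"
  shows "\<bar>integral {a..b} F - (\<Sum>k<n. (b-a)/n * F (a + real k*((b-a)/n)))\<bar> \<le> (b-a) * e"
proof -
  define h where "h = (b-a)/n"
  have h0: "h \<ge> 0" using ab n by (simp add: h_def)
  have "(b-a)/n \<ge> 0" using ab n by simp
  then have e0: "e \<ge> 0" using mod[rule_format, of a a] ab by auto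
  have hn: "a + real n * h = b" using n by (simp add: h_def)
  have "m \<le> n \<longrightarrow> \<bar>integral {a..a + real m*h} F - (\<Sum>k<m. h * F (a + real k*h))\<bar> \<le> real m * h * e" for m :: nat
  proof (induction m)
    case 0 then show ?case by simp
  next
    case (Suc m)
    show ?case
    proof
      assume mn: "Suc m \<le> n"
      define c where "c = a + m*h"
      define c' where "c' = a + Suc m * h"
      have c'h: "c' = c + h" by (simp add: c_def c'_def algebra_simps)
      have "real (Suc m) * h \<le> real n * h" using mn h0 by (intro mult_right_mono) auto
      then have cb: "c' \<le> b" using hn by (simp add: c'_def)
      have ac: "a \<le> c" using h0 by (simp add: c_def)
      have cc: "c \<le> c'" using h0 c'h by simp
      have intc': "F integrable_on {a..c'}"
        using cont cb by (intro integrable_continuous_interval) (auto intro: continuous_on_subset)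
      have intcc: "F integrable_on {c..c'}"
        by (rule integrable_subinterval_real[OF intc']) (use ac in auto)
      have comb: "integral {a..c} F + integral {c..c'} F = integral {a..c'} F"
        using Henstock_Kurzweil_Integration.integral_combine[OF ac cc intc'] .
      have int2: "(\<lambda>t. F t - F c) integrable_on {c..c'}" using intcc by (intro integrable_diff) auto
      have "integral {c..c'} (\<lambda>t. F t - F c) = integral {c..c'} F - h * F c"
        using integral_diff[OF intcc integrable_const_ivl[of "F c" c c']] cc c'h by simp
      moreover have "norm (integral {c..c'} (\<lambda>t. F t - F c)) \<le> e * measure lborel {c..c'}"
      proof (rule has_integral_bound_real[OF e0, of "{}"])
        show "((\<lambda>t. F t - F c) has_integral integral {c..c'} (\<lambda>t. F t - F c)) {c..c'}"
          using int2 by auto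
        fix t assume t: "t \<in> {c..c'} - {}"
        then have "\<bar>t - c\<bar> \<le> h" using c'h by auto
        moreover have "t \<in> {a..b}" "c \<in> {a..b}" using t ac cb cc by auto
        ultimately show "norm (F t - F c) \<le> e" using mod by (auto simp: h_def)
      qed auto
      ultimately have step: "\<bar>integral {c..c'} F - h * F c\<bar> \<le> h * e"
        using cc c'h by (simp add: algebra_simps)
      have IH: "\<bar>integral {a..c} F - (\<Sum>k<m. h * F (a + real k*h))\<bar> \<le> m * h * e"
        using Suc mn by (simp add: c_def)
      have "integral {a..a + Suc m * h} F - (\<Sum>k<Suc m. h * F (a + real k*h))
          = (integral {a..c} F - (\<Sum>k<m. h * F (a + real k*h))) + (integral {c..c'} F - h * F c)"
        using comb by (simp add: c'_def c_def algebra_simps)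
      also have "\<bar>\<dots>\<bar> \<le> m * h * e + h * e" using IH step by (rule abs_triangle_ineq[THEN order_trans, OF add_mono])
      also have "\<dots> = Suc m * h * e" by (simp add: algebra_simps)
      finally show "\<bar>integral {a..a + Suc m * h} F - (\<Sum>k<Suc m. h * F (a + real k*h))\<bar> \<le> Suc m * h * e" .
    qed
  qed
  from this[of n] have X: "\<bar>integral {a..b} F - (\<Sum>k<n. h * F (a + real k*h))\<bar> \<le> real n*h*e"
    using hn by simp
  have nh: "real n * h = b - a" using n by (simp add: h_def)
  show ?thesis unfolding h_def[symmetric] using X nh by simp
qed


lemma riemann_family:
  fixes Fm :: "real \<Rightarrow> 'b \<Rightarrow> real" and a b :: real
  assumes ab: "a \<le> b"
    and eq: "\<forall>e>0. \<exists>d>0. \<forall>s\<in>{a..b}. \<forall>t\<in>{a..b}. \<bar>s-t\<bar> < d \<longrightarrow> (\<forall>x. \<bar>Fm s x - Fm t x\<bar> \<le> e)"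
  shows "\<forall>x. continuous_on {a..b} (\<lambda>t. Fm t x)"
    and "e > 0 \<Longrightarrow> \<exists>d>0. \<forall>n::nat. n > 0 \<longrightarrow> (b-a)/n < d \<longrightarrow>
      (\<forall>x. \<bar>integral {a..b} (\<lambda>t. Fm t x) - (\<Sum>k<n. (b-a)/n * Fm (a + real k*((b-a)/n)) x)\<bar> \<le> e)"
proof -
  show cont: "\<forall>x. continuous_on {a..b} (\<lambda>t. Fm t x)"
    unfolding Elementary_Metric_Spaces.continuous_on_iff
  proof (intro allI ballI impI)
    fix x t and \<epsilon> :: real assume "t \<in> {a..b}" "\<epsilon> > 0"
    then obtain d where d: "d > 0" "\<forall>s\<in>{a..b}. \<forall>t\<in>{a..b}. \<bar>s-t\<bar> < d \<longrightarrow> (\<forall>x. \<bar>Fm s x - Fm t x\<bar> \<le> \<epsilon>/2)"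
      using eq by (meson half_gt_zero)
    show "\<exists>d>0. \<forall>t'\<in>{a..b}. dist t' t < d \<longrightarrow> dist (Fm t' x) (Fm t x) < \<epsilon>"
    proof (intro exI[of _ d] conjI ballI impI)
      fix t' assume "t' \<in> {a..b}" "dist t' t < d"
      then have "\<bar>Fm t' x - Fm t x\<bar> \<le> \<epsilon>/2" using d \<open>t \<in> {a..b}\<close> by (auto simp: dist_real_def)
      then show "dist (Fm t' x) (Fm t x) < \<epsilon>" using \<open>\<epsilon> > 0\<close> by (simp add: dist_real_def)
    qed (use d in auto)
  qed
  assume "e > 0"
  define e' where "e' = e / (b - a + 1)"
  have e': "e' > 0" using \<open>e>0\<close> ab by (simp add: e'_def)
  obtain d where d: "d > 0" "\<forall>s\<in>{a..b}. \<forall>t\<in>{a..b}. \<bar>s-t\<bar> < d \<longrightarrow> (\<forall>x. \<bar>Fm s x - Fm t x\<bar> \<le> e')"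
    using eq e' by blast
  show "\<exists>d>0. \<forall>n::nat. n > 0 \<longrightarrow> (b-a)/n < d \<longrightarrow>
      (\<forall>x. \<bar>integral {a..b} (\<lambda>t. Fm t x) - (\<Sum>k<n. (b-a)/n * Fm (a + real k*((b-a)/n)) x)\<bar> \<le> e)"
  proof -
    have key: "\<bar>integral {a..b} (\<lambda>t. Fm t x) - (\<Sum>k<n. (b-a)/n * Fm (a + real k*((b-a)/n)) x)\<bar> \<le> e"
      if n: "n > 0" "(b-a)/n < d" for n :: nat and x
    proof -
      have "\<bar>integral {a..b} (\<lambda>t. Fm t x) - (\<Sum>k<n. (b-a)/n * Fm (a + real k*((b-a)/n)) x)\<bar> \<le> (b-a) * e'"
        using d n by (intro riemann_bound[OF ab cont[rule_format] n(1)]) auto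
      also have "\<dots> \<le> e"
      proof -
        have "(b-a) * e' \<le> (b - a + 1) * e'" using e' by simp
        also have "\<dots> = e" using ab by (simp add: e'_def)
        finally show ?thesis .
      qed
      finally show ?thesis .
    qed
    show ?thesis using key d(1) by blast
  qed
qed

lemma exists_n_small:
  assumes "d > 0" "a \<le> (b::real)"
  obtains n :: nat where "n > 0" "(b-a)/n < d"
proof -
  obtain n :: nat where n: "(b-a)/d < n" using reals_Archimedean2 by blast
  have "0 \<le> (b-a)/d" using assms by simp
  then have "n > 0" using n by (metis of_nat_0_less_iff order_le_less_trans)
  moreover have "b - a < d * n" using n assms by (simp add: field_simps)
  then have "(b-a)/n < d" using \<open>n>0\<close> by (simp add: field_simps)
  ultimately show ?thesis using that by blast
qed

lemma riemann_points:
  assumes "a \<le> b" "k < (n::nat)"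
  shows "a + real k*((b-a)/n) \<in> {a..b}"
proof -
  have "real k * ((b-a)/n) \<le> real n * ((b-a)/n)"
    using assms by (intro mult_right_mono) auto
  also have "\<dots> = b - a" using assms by simp
  finally show ?thesis using assms by simp
qed

context
  fixes S :: "'a::metric_space set" and T :: "real \<Rightarrow> ('a \<Rightarrow> real) \<Rightarrow> ('a \<Rightarrow> real)"
  assumes fs: "feller_semigroup S T"
begin

lemma T_equicont_aux:
  assumes "f \<in> Cfun S" "e > 0"
  obtains d where "d > 0" "\<And>s t x. 0 \<le> t \<Longrightarrow> t \<le> s \<Longrightarrow> s - t < d \<Longrightarrow> \<bar>T s f x - T t f x\<bar> \<le> e"
proof -
  obtain d where d: "d > 0" "\<forall>t. 0 < t \<and> t < d \<longrightarrow> (\<forall>x\<in>S. \<bar>T t f x - f x\<bar> \<le> e)"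
    using T_strong[OF fs assms] by blast
  show ?thesis
  proof (rule that[OF d(1)])
    fix s t x assume st: "0 \<le> t" "t \<le> s" "s - t < d"
    show "\<bar>T s f x - T t f x\<bar> \<le> e"
    proof (cases "s = t")
      case True then show ?thesis using assms by simp
    next
      case False
      define h where "h = s - t"
      have h: "0 < h" "h < d" using st False by (auto simp: h_def)
      have ThC: "T h f \<in> Cfun S" using T_Cfun[OF fs] h assms by simp
      have "T s f = T t (T h f)" using T_semi[OF fs, of t h f] st h assms by (simp add: h_def)
      then have "T s f x - T t f x = T t (\<lambda>y. T h f y - f y) x"
        using T_diff[OF fs st(1) ThC assms(1)] by simp
      moreover have "\<bar>T t (\<lambda>y. T h f y - f y) x\<bar> \<le> e"
        using d h st assms ThC
        by (intro T_contr_all[OF fs]) (auto intro!: Cfun_lin[of _ S _ 1 "-1", simplified])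
      ultimately show ?thesis by simp
    qed
  qed
qed

lemma T_equicont:
  assumes "f \<in> Cfun S" "e > 0"
  shows "\<exists>d>0. \<forall>s t x. 0 \<le> s \<longrightarrow> 0 \<le> t \<longrightarrow> \<bar>s - t\<bar> < d \<longrightarrow> \<bar>T s f x - T t f x\<bar> \<le> e"
proof -
  obtain d where d: "d > 0" "\<And>s t x. 0 \<le> t \<Longrightarrow> t \<le> s \<Longrightarrow> s - t < d \<Longrightarrow> \<bar>T s f x - T t f x\<bar> \<le> e"
    using T_equicont_aux[OF assms] by blast
  show ?thesis
  proof (intro exI[of _ d] conjI allI impI)
    fix s t x assume "0 \<le> (s::real)" "0 \<le> t" "\<bar>s - t\<bar> < d"
    then show "\<bar>T s f x - T t f x\<bar> \<le> e"
      using d(2)[of t s x] d(2)[of s t x] by (cases "t \<le> s") (auto simp: abs_minus_commute)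
  qed (use d in auto)
qed


lemma integral_family:
  fixes a b :: real and Fm :: "real \<Rightarrow> 'a \<Rightarrow> real"
  assumes ab: "a \<le> b" and FC: "\<forall>t\<in>{a..b}. Fm t \<in> Cfun S"
    and eq: "\<forall>e>0. \<exists>d>0. \<forall>s\<in>{a..b}. \<forall>t\<in>{a..b}. \<bar>s-t\<bar> < d \<longrightarrow> (\<forall>x. \<bar>Fm s x - Fm t x\<bar> \<le> e)"
  shows "(\<lambda>x. integral {a..b} (\<lambda>t. Fm t x)) \<in> Cfun S"
    and "h \<ge> 0 \<Longrightarrow> T h (\<lambda>x. integral {a..b} (\<lambda>t. Fm t x)) = (\<lambda>x. integral {a..b} (\<lambda>t. T h (Fm t) x))"
proof -
  define R where "R n = (\<lambda>x. \<Sum>k<n. (b-a)/n * Fm (a + real k*((b-a)/n)) x)" for n :: nat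
  have RC1: "(\<lambda>x. c * Fm (a + real k*((b-a)/n)) x) \<in> Cfun S" if "k < n" for c and k n :: nat
    using FC riemann_points[OF ab that] by (intro Cfun_scale) auto
  have RC: "R n \<in> Cfun S" for n
    unfolding R_def by (rule Cfun_sum, simp, rule ballI, rule RC1, simp)
  define I where "I = (\<lambda>x. integral {a..b} (\<lambda>t. Fm t x))"
  have approx: "\<exists>n. \<forall>x. \<bar>I x - R n x\<bar> \<le> e" if e0: "e > 0" for e
  proof -
    obtain d where d: "d > 0" "\<forall>n::nat. n > 0 \<longrightarrow> (b-a)/n < d \<longrightarrow>
      (\<forall>x. \<bar>integral {a..b} (\<lambda>t. Fm t x) - (\<Sum>k<n. (b-a)/n * Fm (a + real k*((b-a)/n)) x)\<bar> \<le> e)"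
      using riemann_family(2)[OF ab eq e0] by blast
    obtain n :: nat where n: "n > 0" "(b-a)/n < d" by (rule exists_n_small[OF d(1) ab])
    have "\<forall>x. \<bar>I x - R n x\<bar> \<le> e"
      unfolding I_def R_def by (intro allI) (rule d(2)[rule_format, OF n])
    then show ?thesis by blast
  qed
  show IC: "(\<lambda>x. integral {a..b} (\<lambda>t. Fm t x)) \<in> Cfun S"
  proof (rule Cfun_uniform)
    fix e :: real assume "e > 0"
    then obtain n where n: "\<forall>x. \<bar>I x - R n x\<bar> \<le> e" using approx by blast
    show "\<exists>f\<in>Cfun S. \<forall>x. \<bar>integral {a..b} (\<lambda>t. Fm t x) - f x\<bar> \<le> e"
      using RC[of n] n unfolding I_def by blast
  qed
  assume h: "h \<ge> 0"
  define GF where "GF t = T h (Fm t)" for t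
  have GFC: "\<forall>t\<in>{a..b}. GF t \<in> Cfun S" using FC T_Cfun[OF fs h] by (auto simp: GF_def)
  have eq2: "\<forall>e>0. \<exists>d>0. \<forall>s\<in>{a..b}. \<forall>t\<in>{a..b}. \<bar>s-t\<bar> < d \<longrightarrow> (\<forall>x. \<bar>GF s x - GF t x\<bar> \<le> e)"
  proof (intro allI impI)
    fix e :: real assume "e > 0"
    then obtain d where d: "d > 0" "\<forall>s\<in>{a..b}. \<forall>t\<in>{a..b}. \<bar>s-t\<bar> < d \<longrightarrow> (\<forall>x. \<bar>Fm s x - Fm t x\<bar> \<le> e)"
      using eq by blast
    show "\<exists>d>0. \<forall>s\<in>{a..b}. \<forall>t\<in>{a..b}. \<bar>s-t\<bar> < d \<longrightarrow> (\<forall>x. \<bar>GF s x - GF t x\<bar> \<le> e)"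
    proof (intro exI[of _ d] conjI ballI impI allI)
      fix s t x assume st: "s \<in> {a..b}" "t \<in> {a..b}" "\<bar>s-t\<bar> < d"
      have "GF s x - GF t x = T h (\<lambda>y. Fm s y - Fm t y) x"
        using T_diff[OF fs h, of "Fm s" "Fm t"] FC st by (simp add: GF_def)
      also have "\<bar>\<dots>\<bar> \<le> e"
        using d st FC \<open>e>0\<close> by (intro T_contr_all[OF fs h]) (auto intro!: Cfun_lin[of _ S _ 1 "-1", simplified])
      finally show "\<bar>GF s x - GF t x\<bar> \<le> e" .
    qed (use d in auto)
  qed
  define J where "J = (\<lambda>x. integral {a..b} (\<lambda>t. GF t x))"
  have TR: "T h (R n) = (\<lambda>x. \<Sum>k<n. (b-a)/n * GF (a + real k*((b-a)/n)) x)" for n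
  proof -
    have "T h (R n) = (\<lambda>x. \<Sum>k<n. T h (\<lambda>x. (b-a)/n * Fm (a + real k*((b-a)/n)) x) x)"
      unfolding R_def by (rule T_sum[OF fs h], simp, rule ballI, rule RC1, simp)
    also have "\<dots> = (\<lambda>x. \<Sum>k<n. (b-a)/n * GF (a + real k*((b-a)/n)) x)"
    proof -
      have "T h (\<lambda>x. (b-a)/n * Fm (a + real k*((b-a)/n)) x) = (\<lambda>x. (b-a)/n * GF (a + real k*((b-a)/n)) x)"
        if "k < n" for k
        unfolding GF_def using FC riemann_points[OF ab that] by (intro T_scale[OF fs h]) auto
      then show ?thesis by (intro ext sum.cong) auto
    qed
    finally show ?thesis .
  qed
  have "T h I x - J x = 0" for x
  proof (rule small_zero)
    fix e :: real assume "e > 0"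
    then have e2: "e/2 > 0" by simp
    obtain d1 where d1: "d1 > 0" "\<forall>n::nat. n > 0 \<longrightarrow> (b-a)/n < d1 \<longrightarrow>
      (\<forall>x. \<bar>integral {a..b} (\<lambda>t. Fm t x) - (\<Sum>k<n. (b-a)/n * Fm (a + real k*((b-a)/n)) x)\<bar> \<le> e/2)"
      using riemann_family(2)[OF ab eq e2] by blast
    obtain d2 where d2: "d2 > 0" "\<forall>n::nat. n > 0 \<longrightarrow> (b-a)/n < d2 \<longrightarrow>
      (\<forall>x. \<bar>integral {a..b} (\<lambda>t. GF t x) - (\<Sum>k<n. (b-a)/n * GF (a + real k*((b-a)/n)) x)\<bar> \<le> e/2)"
      using riemann_family(2)[OF ab eq2 e2] by blast
    have "min d1 d2 > 0" using d1 d2 by simp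
    then obtain n :: nat where n: "n > 0" "(b-a)/n < min d1 d2"
      by (rule exists_n_small[OF _ ab])
    have n1: "n > 0" "(b-a)/n < d1" "(b-a)/n < d2" using n by auto
    have b1: "\<forall>y. \<bar>I y - R n y\<bar> \<le> e/2" unfolding I_def R_def by (intro allI) (rule d1(2)[rule_format, OF n1(1,2)])
    have b2: "\<bar>J x - T h (R n) x\<bar> \<le> e/2" unfolding J_def TR by (rule d2(2)[rule_format, OF n1(1,3)])
    have "T h I x - T h (R n) x = T h (\<lambda>y. I y - R n y) x"
      using T_diff[OF fs h IC[folded I_def] RC[of n]] by simp
    also have "\<bar>\<dots>\<bar> \<le> e/2"
      using b1 \<open>e>0\<close> IC[folded I_def] RC[of n]
      by (intro T_contr_all[OF fs h]) (auto intro!: Cfun_lin[of _ S _ 1 "-1", simplified])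
    finally have "\<bar>T h I x - T h (R n) x\<bar> \<le> e/2" .
    then show "\<bar>T h I x - J x\<bar> \<le> e" using b2 by linarith
  qed
  then show "T h (\<lambda>x. integral {a..b} (\<lambda>t. Fm t x)) = (\<lambda>x. integral {a..b} (\<lambda>t. T h (Fm t) x))"
    by (auto simp: I_def J_def GF_def fun_eq_iff)
qed

end



lemma exp_lip:
  assumes "0 \<le> t" "t \<le> s" "lam > (0::real)"
  shows "\<bar>exp (-lam* s) - exp (-lam*t)\<bar> \<le> lam * (s - t)"
proof -
  have e1: "exp (-lam* s) = exp (-lam*t) * exp (-lam*(s-t))"
    by (simp add: exp_add[symmetric] algebra_simps)
  have e2: "exp (-lam*(s-t)) \<le> 1" using assms by simp
  have e2': "1 - lam*(s-t) \<le> exp (-lam*(s-t))" using exp_ge_add_one_self[of "-lam*(s-t)"] by simp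
  have e3: "exp (-lam*t) \<le> 1" "0 < exp (-lam*t)" using assms by auto
  have "exp (-lam*t) * (1 - exp (-lam*(s-t))) \<le> 1 - exp (-lam*(s-t))"
    using e2 e3 by (intro mult_left_le_one_le) auto
  moreover have "0 \<le> exp (-lam*t) * (1 - exp (-lam*(s-t)))" using e2 e3 by simp
  moreover have "exp (-lam*t) - exp (-lam* s) = exp (-lam*t) * (1 - exp (-lam*(s-t)))"
    using e1 by (simp add: algebra_simps)
  ultimately show ?thesis using e2' by simp
qed

lemma exp_lip2:
  assumes "0 \<le> t" "0 \<le> s" "lam > (0::real)"
  shows "\<bar>exp (-lam* s) - exp (-lam*t)\<bar> \<le> lam * \<bar>s - t\<bar>"
  using exp_lip[OF assms(1) _ assms(3), of s] exp_lip[OF assms(2) _ assms(3), of t] 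
  by (cases "t \<le> s") (auto simp: abs_minus_commute)

lemma exp_small:
  assumes "lam > (0::real)" "B \<ge> 0" "e > 0"
  shows "\<exists>n::nat. B * exp (-lam * real n) / lam < e"
proof -
  have "filterlim (\<lambda>n::nat. lam * real n) at_top sequentially"
    by (rule filterlim_tendsto_pos_mult_at_top[OF tendsto_const assms(1) filterlim_real_sequentially])
  then have "filterlim (\<lambda>n::nat. exp (lam * real n)) at_top sequentially"
    by (rule filterlim_compose[OF exp_at_top])
  then have "((\<lambda>n::nat. inverse (exp (lam * real n))) \<longlongrightarrow> 0) sequentially"
    by (rule tendsto_inverse_0_at_top)
  then have "((\<lambda>n::nat. B / lam * inverse (exp (lam * real n))) \<longlongrightarrow> B / lam * 0) sequentially"
    by (intro tendsto_mult tendsto_const)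
  then have "eventually (\<lambda>n. B / lam * inverse (exp (lam * real n)) < e) sequentially"
    using assms(3) by (intro order_tendstoD(2)) auto
  then obtain N where "\<forall>n\<ge>N. B / lam * inverse (exp (lam * real n)) < e"
    unfolding eventually_sequentially by blast
  then have "B / lam * inverse (exp (lam * real N)) < e" by blast
  then show ?thesis by (intro exI[of _ N]) (simp add: exp_minus field_simps)
qed

lemma exp_integral:
  assumes "a \<le> b" "lam > (0::real)"
  shows "((\<lambda>t. B * exp (-lam*t)) has_integral (B * exp (-lam*a) / lam - B * exp (-lam*b) / lam)) {a..b}"
proof -
  have "((\<lambda>t. - B * exp (-lam*t) / lam) has_real_derivative (B * exp (-lam*t))) (at t within {a..b})" for t
    using assms by (auto intro!: derivative_eq_intros simp: field_simps)
  then have "((\<lambda>t. B * exp (-lam*t)) has_integral ((- B * exp (-lam*b) / lam) - (- B * exp (-lam*a) / lam))) {a..b}"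
    by (intro fundamental_theorem_of_calculus[OF assms(1)]) (simp add: has_real_derivative_iff_has_vector_derivative)
  then show ?thesis by (simp add: algebra_simps)
qed

context
  fixes S :: "'a::metric_space set" and T :: "real \<Rightarrow> ('a \<Rightarrow> real) \<Rightarrow> ('a \<Rightarrow> real)"
  assumes fs: "feller_semigroup S T" and cS: "compact S"
begin

lemma laplace_exists:
  assumes lam: "lam > 0" and phiC: "\<phi> \<in> Cfun S"
  shows "\<exists>g. g \<in> Cfun S \<and> unif_deriv0 S T g (\<lambda>x. lam * g x - \<phi> x)"
proof -
  obtain B where B: "B \<ge> 0" "\<forall>x. \<bar>\<phi> x\<bar> \<le> B" using Cfun_bounded[OF cS phiC] by blast
  have TB: "\<bar>T t \<phi> x\<bar> \<le> B" if "t \<ge> 0" for t x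
    using B that phiC by (intro T_contr_all[OF fs]) auto
  define F where "F t x = exp (-lam*t) * T t \<phi> x" for t x
  have FC: "F t \<in> Cfun S" if "t \<ge> 0" for t
    unfolding F_def[abs_def] using T_Cfun[OF fs that phiC] by (intro Cfun_scale) auto
  have F0: "F 0 x = \<phi> x" for x using T_0[OF fs phiC] by (simp add: F_def)
  have Fequi: "\<exists>d>0. \<forall>s t x. 0 \<le> s \<longrightarrow> 0 \<le> t \<longrightarrow> \<bar>s - t\<bar> < d \<longrightarrow> \<bar>F s x - F t x\<bar> \<le> e" if "e > 0" for e
  proof -
    obtain d1 where d1: "d1 > 0" "\<forall>s t x. 0 \<le> s \<longrightarrow> 0 \<le> t \<longrightarrow> \<bar>s - t\<bar> < d1 \<longrightarrow> \<bar>T s \<phi> x - T t \<phi> x\<bar> \<le> e/2"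
      using T_equicont[OF fs phiC, of "e/2"] \<open>e>0\<close> by auto
    define d2 where "d2 = e / (2 * (lam * B + 1))"
    have "lam * B \<ge> 0" using lam B by simp
    then have lb: "lam * B + 1 > 0" by linarith
    have d2: "d2 > 0" using \<open>e>0\<close> lb by (simp add: d2_def)
    show ?thesis
    proof (intro exI[of _ "min d1 d2"] conjI allI impI)
      fix s t x assume st: "0 \<le> (s::real)" "0 \<le> t" "\<bar>s - t\<bar> < min d1 d2"
      have eq: "F s x - F t x = (exp (-lam* s) - exp (-lam*t)) * T s \<phi> x + exp (-lam*t) * (T s \<phi> x - T t \<phi> x)"
        by (simp add: F_def algebra_simps)
      have "\<bar>(exp (-lam* s) - exp (-lam*t)) * T s \<phi> x\<bar> \<le> (lam * \<bar>s - t\<bar>) * B"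
        unfolding abs_mult using exp_lip2[OF st(2,1) lam] TB[OF st(1)]
        by (intro mult_mono) auto
      also have "\<dots> \<le> (lam * d2) * B" using st lam B by (intro mult_right_mono mult_left_mono) auto
      also have "\<dots> = e / 2 * (lam * B / (lam * B + 1))" using lb by (simp add: d2_def field_simps)
      also have "\<dots> \<le> e / 2 * 1" using lb \<open>e>0\<close> by (intro mult_left_mono) auto
      finally have t1: "\<bar>(exp (-lam* s) - exp (-lam*t)) * T s \<phi> x\<bar> \<le> e/2" by simp
      have "\<bar>exp (-lam*t) * (T s \<phi> x - T t \<phi> x)\<bar> \<le> 1 * (e/2)"
        unfolding abs_mult using d1 st lam by (intro mult_mono) auto
      then have t2: "\<bar>exp (-lam*t) * (T s \<phi> x - T t \<phi> x)\<bar> \<le> e/2" by simp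
      show "\<bar>F s x - F t x\<bar> \<le> e" unfolding eq using t1 t2 by linarith
    qed (use d1 d2 in auto)
  qed
  have Fequi_ab: "\<forall>e>0. \<exists>d>0. \<forall>s\<in>{a..b}. \<forall>t\<in>{a..b}. \<bar>s-t\<bar> < d \<longrightarrow> (\<forall>x. \<bar>F s x - F t x\<bar> \<le> e)"
    if "0 \<le> a" for a b
    using Fequi that by (meson atLeastAtMost_iff order_trans)
  have Fint: "(\<lambda>t. F t x) integrable_on {a..b}" if "0 \<le> a" "a \<le> b" for a b x
    using riemann_family(1)[OF that(2) Fequi_ab[OF that(1)]] by (intro integrable_continuous_interval) auto
  define G where "G b x = integral {0..b} (\<lambda>t. F t x)" for b x
  have GC: "G b \<in> Cfun S" if "b \<ge> 0" for b
    unfolding G_def[abs_def] using integral_family(1)[OF fs that, of F] FC Fequi_ab[of 0 b] by auto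
  have comb: "G b' x - G b x = integral {b..b'} (\<lambda>t. F t x)" if "0 \<le> b" "b \<le> b'" for b b' x
    using Henstock_Kurzweil_Integration.integral_combine[OF that Fint[of 0 b' x]] that by (simp add: G_def)
  define Bd where "Bd b = B * exp (-lam*b) / lam" for b
  have Bd0: "Bd b \<ge> 0" for b using B lam by (simp add: Bd_def)
  have Bdmono: "Bd b' \<le> Bd b" if "b \<le> b'" for b b'
    using that B lam by (auto simp: Bd_def divide_right_mono mult_left_mono)
  have tail: "\<bar>G b' x - G b x\<bar> \<le> Bd b" if "0 \<le> b" "b \<le> b'" for b b' x
  proof -
    have "\<bar>integral {b..b'} (\<lambda>t. F t x)\<bar> \<le> integral {b..b'} (\<lambda>t. B * exp (-lam*t))"
    proof (rule Henstock_Kurzweil_Integration.integral_norm_bound_integral[where f="\<lambda>t. F t x", simplified])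
      show "(\<lambda>t. F t x) integrable_on {b..b'}" using Fint that by auto
      show "(\<lambda>t. B * exp (-lam*t)) integrable_on {b..b'}" using exp_integral[OF that(2) lam] by blast
      fix t assume "t \<in> {b..b'}"
      then have "t \<ge> 0" using that by auto
      then show "\<bar>F t x\<bar> \<le> B * exp (-lam*t)"
        unfolding F_def abs_mult using TB[of t x] by (simp add: mult.commute)
    qed
    also have "\<dots> = B * exp (-lam*b) / lam - B * exp (-lam*b') / lam"
      using exp_integral[OF that(2) lam] by (rule integral_unique)
    also have "\<dots> \<le> Bd b" using B lam by (simp add: Bd_def)
    finally show ?thesis using comb[OF that] by simp
  qed
  have small: "\<exists>n::nat. Bd (real n) < e" if "e > 0" for e
    using exp_small[OF lam B(1) that] by (simp add: Bd_def)
  define g where "g x = lim (\<lambda>n. G (real n) x)" for x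
  have conv: "(\<lambda>n. G (real n) x) \<longlonglongrightarrow> g x" for x
  proof -
    have "Cauchy (\<lambda>n. G (real n) x)"
    proof (rule CauchyI)
      fix e :: real assume "e > 0"
      then obtain M where M: "Bd (real M) < e" using small by blast
      show "\<exists>M. \<forall>m\<ge>M. \<forall>n\<ge>M. norm (G (real m) x - G (real n) x) < e"
      proof (intro exI[of _ M] allI impI)
        fix m n assume mn: "M \<le> m" "M \<le> n"
        have "\<bar>G (real m) x - G (real n) x\<bar> \<le> Bd (real (min m n))"
          using tail[of "real n" "real m" x] tail[of "real m" "real n" x]
          by (cases "n \<le> m") (auto simp: abs_minus_commute min_def)
        also have "\<dots> \<le> Bd (real M)" using mn by (intro Bdmono) auto
        finally show "norm (G (real m) x - G (real n) x) < e" using M by simp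
      qed
    qed
    then show ?thesis unfolding g_def by (simp add: Cauchy_convergent_iff convergent_LIMSEQ_iff)
  qed
  have gtail: "\<bar>g x - G b x\<bar> \<le> Bd b" if "b \<ge> 0" for b x
  proof -
    have "(\<lambda>n. \<bar>G (real n) x - G b x\<bar>) \<longlonglongrightarrow> \<bar>g x - G b x\<bar>"
      by (intro tendsto_intros conv)
    moreover obtain N :: nat where "b \<le> real N" using real_arch_simple by blast
    then have "\<forall>n\<ge>N. \<bar>G (real n) x - G b x\<bar> \<le> Bd b"
      using that by (intro allI impI tail) auto
    ultimately show ?thesis by (intro LIMSEQ_le_const2) auto
  qed
  have gC: "g \<in> Cfun S"
  proof (rule Cfun_uniform)
    fix e :: real assume "e > 0"
    then obtain n :: nat where n: "Bd (real n) < e" using small by blast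
    have "\<forall>x. \<bar>g x - G (real n) x\<bar> \<le> e"
    proof
      fix x show "\<bar>g x - G (real n) x\<bar> \<le> e" using gtail[of "real n" x] n by simp
    qed
    moreover have "G (real n) \<in> Cfun S" using GC[of "real n"] by simp
    ultimately show "\<exists>f\<in>Cfun S. \<forall>x. \<bar>g x - f x\<bar> \<le> e" by blast
  qed
  have G0: "G 0 x = 0" for x by (simp add: G_def)
  have gB: "\<bar>g x\<bar> \<le> B / lam" for x
    using gtail[of 0 x] G0 by (simp add: Bd_def)
  have TG: "T h (G b) x = exp (lam*h) * (G (b+h) x - G h x)" if "h \<ge> 0" "b \<ge> 0" for h b x
  proof -
    have TF: "T h (F t) = (\<lambda>x. exp (lam*h) * F (h + t) x)" if "t \<ge> 0" for t
    proof -
      have "T h (F t) = (\<lambda>x. exp (-lam*t) * T h (T t \<phi>) x)"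
        unfolding F_def[abs_def] using T_scale[OF fs \<open>h \<ge> 0\<close> T_Cfun[OF fs that phiC]] by simp
      also have "\<dots> = (\<lambda>x. exp (-lam*t) * T (h + t) \<phi> x)"
        using T_semi[OF fs \<open>h\<ge>0\<close> that phiC] by simp
      also have "\<dots> = (\<lambda>x. exp (lam*h) * F (h + t) x)"
        by (simp add: F_def fun_eq_iff mult.assoc[symmetric] exp_add[symmetric] algebra_simps)
      finally show ?thesis .
    qed
    have "T h (G b) x = integral {0..b} (\<lambda>t. T h (F t) x)"
      unfolding G_def[abs_def] using integral_family(2)[OF fs that(2), of F h] FC Fequi_ab[of 0 b] that
      by auto
    also have "\<dots> = integral {0..b} (\<lambda>t. exp (lam*h) * F (h + t) x)"
      using TF by (intro integral_cong) auto
    also have "\<dots> = exp (lam*h) * integral {0..b} (\<lambda>t. F (h + t) x)"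
      by simp
    also have "integral {0..b} (\<lambda>t. F (h + t) x) = integral {0+h..b+h} (\<lambda>s. F s x)"
      using integral_shift_Icc_real[of 0 b "\<lambda>s. F s x" h] by (simp add: comp_def)
    also have "\<dots> = G (b+h) x - G h x"
      using comb[of h "b+h" x] that by simp
    finally show ?thesis .
  qed
  have Tg: "T h g x = exp (lam*h) * (g x - G h x)" if h: "h \<ge> 0" for h x
  proof -
    have "T h g x - exp (lam*h) * (g x - G h x) = 0"
    proof (rule small_zero)
      fix e :: real assume "e > 0"
      define E where "E = exp (lam*h)"
      have E0: "E > 0" by (simp add: E_def)
      obtain n :: nat where n: "Bd (real n) < e / (1 + E)" using small[of "e / (1 + E)"] \<open>e>0\<close> E0 by auto
      have d1: "\<bar>T h g x - T h (G n) x\<bar> \<le> Bd n"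
      proof -
        have "T h g x - T h (G n) x = T h (\<lambda>y. g y - G n y) x"
          using T_diff[OF fs h gC GC[of n]] by simp
        also have "\<bar>\<dots>\<bar> \<le> Bd n"
          using gtail[of n] gC GC[of n] Bd0[of n]
          by (intro T_contr_all[OF fs h]) (auto intro!: Cfun_lin[of _ S _ 1 "-1", simplified])
        finally show ?thesis .
      qed
      have d2: "\<bar>G (n + h) x - g x\<bar> \<le> Bd n"
        using gtail[of "n + h" x] Bdmono[of n "n+h"] h by (simp add: abs_minus_commute)
      have "T h g x - E * (g x - G h x) = (T h g x - T h (G n) x) + E * (G (n + h) x - g x)"
        using TG[OF h, of n x] by (simp add: E_def algebra_simps)
      also have "\<bar>\<dots>\<bar> \<le> Bd n + E * Bd n"
        using d1 d2 E0 by (intro abs_triangle_ineq[THEN order_trans] add_mono) (auto simp: abs_mult)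
      also have "\<dots> = (1 + E) * Bd n" by (simp add: algebra_simps)
      also have "\<dots> \<le> e" using n E0 by (simp add: field_simps)
      finally show "\<bar>T h g x - exp (lam*h) * (g x - G h x)\<bar> \<le> e" by (simp add: E_def)
    qed
    then show ?thesis by simp
  qed
  have deriv: "unif_deriv0 S T g (\<lambda>x. lam * g x - \<phi> x)"
    unfolding unif_deriv0_def
  proof (intro allI impI)
    fix \<epsilon> :: real assume "\<epsilon> > 0"
    define K where "K = B / lam + 2 + B"
    have "B / lam \<ge> 0" using B lam by simp
    then have K: "K > 0" using B by (simp add: K_def)
    define e where "e = \<epsilon> / K"
    have e: "e > 0" using K \<open>\<epsilon>>0\<close> by (simp add: e_def)
    have "((\<lambda>h. exp (lam*h)) has_real_derivative lam) (at 0)"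
      by (auto intro!: derivative_eq_intros)
    then have "((\<lambda>h. (exp (lam*h) - 1) / h) \<longlongrightarrow> lam) (at 0)"
      by (simp add: has_field_derivative_iff)
    then have "eventually (\<lambda>h. dist ((exp (lam*h) - 1) / h) lam < e) (at 0)"
      using e by (rule tendstoD)
    then obtain d1 where d1: "d1 > 0" "\<forall>h. h \<noteq> 0 \<and> dist h 0 < d1 \<longrightarrow> dist ((exp (lam*h) - 1) / h) lam < e"
      unfolding eventually_at by auto
    have "((\<lambda>h. exp (lam*h)) \<longlongrightarrow> exp (lam * 0)) (at 0)"
      by (intro tendsto_intros)
    then have "eventually (\<lambda>h. dist (exp (lam*h)) 1 < min e 1) (at 0)"
      using e by (intro tendstoD) auto
    then obtain d3 where d3: "d3 > 0" "\<forall>h. h \<noteq> 0 \<and> dist h 0 < d3 \<longrightarrow> dist (exp (lam*h)) 1 < min e 1"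
      unfolding eventually_at by auto
    obtain d2 where d2: "d2 > 0" "\<forall>s t x. 0 \<le> s \<longrightarrow> 0 \<le> t \<longrightarrow> \<bar>s - t\<bar> < d2 \<longrightarrow> \<bar>F s x - F t x\<bar> \<le> e"
      using Fequi[OF e] by blast
    show "\<exists>d>0. \<forall>h. 0 < h \<and> h < d \<longrightarrow> (\<forall>x\<in>S. \<bar>(T h g x - g x) / h - (lam * g x - \<phi> x)\<bar> \<le> \<epsilon>)"
    proof (intro exI[of _ "min d1 (min d2 d3)"] conjI allI impI ballI)
      show "min d1 (min d2 d3) > 0" using d1 d2 d3 by simp
      fix h x assume h: "0 < h \<and> h < min d1 (min d2 d3)"
      define E where "E = exp (lam*h)"
      have "h \<noteq> 0 \<and> dist h 0 < d1" using h by (simp add: dist_real_def)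
      then have "dist ((exp (lam*h) - 1) / h) lam < e" using d1(2) by blast
      then have c1: "\<bar>(E - 1) / h - lam\<bar> \<le> e" by (simp add: E_def dist_real_def)
      have "h \<noteq> 0 \<and> dist h 0 < d3" using h by (simp add: dist_real_def)
      then have "dist (exp (lam*h)) 1 < min e 1" using d3(2) by blast
      then have c3: "\<bar>E - 1\<bar> \<le> e" "E \<le> 2" by (auto simp: E_def dist_real_def)
      have E0: "E > 0" by (simp add: E_def)
      have "\<bar>G h x - h * \<phi> x\<bar> \<le> e * h"
      proof -
        have i1: "(\<lambda>t. F t x) integrable_on {0..h}" using Fint h by auto
        have "integral {0..h} (\<lambda>t. F t x - \<phi> x) = G h x - h * \<phi> x"
          using integral_diff[OF i1 integrable_const_ivl[of "\<phi> x" 0 h]] h by (simp add: G_def)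
        moreover have "norm (integral {0..h} (\<lambda>t. F t x - \<phi> x)) \<le> e * measure lborel {0..h}"
        proof (rule has_integral_bound_real[of e "{}"])
          show "((\<lambda>t. F t x - \<phi> x) has_integral integral {0..h} (\<lambda>t. F t x - \<phi> x)) {0..h}"
            using i1 by (intro integrable_integral integrable_diff) auto
          fix t assume "t \<in> {0..h} - {}"
          then show "norm (F t x - \<phi> x) \<le> e"
            using d2(2)[rule_format, of t 0 x] h F0 by auto
        qed (use e in auto)
        ultimately show ?thesis using h by simp
      qed
      then have c2: "\<bar>(G h x - h * \<phi> x) / h\<bar> \<le> e" using h by (simp add: field_simps)
      have Tgh: "T h g x = E * (g x - G h x)" using Tg[of h x] h by (simp add: E_def)
      have hne: "h \<noteq> 0" using h by simp
      have eq: "(T h g x - g x) / h - (lam * g x - \<phi> x)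
          = ((E - 1) / h - lam) * g x - E * ((G h x - h * \<phi> x) / h) - (E - 1) * \<phi> x"
        unfolding Tgh using hne by (simp add: diff_divide_distrib add_divide_distrib algebra_simps)
      have t1: "\<bar>((E - 1) / h - lam) * g x\<bar> \<le> e * (B / lam)"
        unfolding abs_mult using c1 gB e by (intro mult_mono) auto
      have t2: "\<bar>E * ((G h x - h * \<phi> x) / h)\<bar> \<le> 2 * e"
        unfolding abs_mult using c2 c3 E0 by (intro mult_mono) auto
      have t3: "\<bar>(E - 1) * \<phi> x\<bar> \<le> e * B"
        unfolding abs_mult using c3 B e by (intro mult_mono) auto
      have "\<bar>(T h g x - g x) / h - (lam * g x - \<phi> x)\<bar> \<le> e * (B / lam) + 2 * e + e * B"
        unfolding eq using t1 t2 t3 by linarith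
      also have "\<dots> = e * K" by (simp add: K_def algebra_simps)
      also have "\<dots> = \<epsilon>" using K by (simp add: e_def)
      finally show "\<bar>(T h g x - g x) / h - (lam * g x - \<phi> x)\<bar> \<le> \<epsilon>" .
    qed
  qed
  show ?thesis using gC deriv by blast
qed

end

lemma resolvent_props:
  fixes S :: "'a::metric_space set"
  assumes "compact S" "feller_generator S A D" "lam > 0" "\<phi> \<in> Cfun S"
  shows "resolvent A D lam \<phi> \<in> D \<and> (\<lambda>x. lam * resolvent A D lam \<phi> x - A (resolvent A D lam \<phi>) x) = \<phi>"
proof -
  obtain T where fs: "feller_semigroup S T" and gen: "generates S T A D"
    using assms(2) unfolding feller_generator_def by blast
  obtain g where g: "g \<in> Cfun S" "unif_deriv0 S T g (\<lambda>x. lam * g x - \<phi> x)"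
    using laplace_exists[OF fs assms(1) assms(3,4)] by blast
  have "(\<lambda>x. lam * g x - \<phi> x) \<in> Cfun S"
    using Cfun_lin[OF g(1) assms(4), of lam "-1"] by simp
  then have gD: "g \<in> D" "A g = (\<lambda>x. lam * g x - \<phi> x)" using D_intro[OF fs gen g(1) _ g(2)] by auto
  have eq: "(\<lambda>x. lam * g x - A g x) = \<phi>" using gD(2) by simp
  have "resolvent A D lam \<phi> = g" using resolvent_eq[OF fs gen assms(1,3) gD(1) eq] .
  then show ?thesis using gD(1) eq by simp
qed



lemma sn_ge: "finite I \<Longrightarrow> ij \<in> I \<Longrightarrow> \<bar>w ij\<bar> \<le> supnorm_on I w"
  unfolding supnorm_on_def by (intro Max_ge) auto

lemma sn_nonneg: "finite I \<Longrightarrow> 0 \<le> supnorm_on I w"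
  unfolding supnorm_on_def by (intro Max_ge) auto

lemma sn_le: "finite I \<Longrightarrow> 0 \<le> B \<Longrightarrow> (\<forall>ij\<in>I. \<bar>w ij\<bar> \<le> B) \<Longrightarrow> supnorm_on I w \<le> B"
  unfolding supnorm_on_def by (subst Max_le_iff) auto

lemma sn_cong: "(\<forall>ij\<in>I. w ij = w' ij) \<Longrightarrow> supnorm_on I w = supnorm_on I w'"
  unfolding supnorm_on_def by (metis (mono_tags, lifting) image_cong)

lemma sn_zero: "finite I \<Longrightarrow> supnorm_on I w \<le> 0 \<Longrightarrow> ij \<in> I \<Longrightarrow> w ij = 0"
  using sn_ge[of I ij w] by simp

definition Lmat :: "(nat \<times> nat) set \<Rightarrow> (nat \<times> nat \<Rightarrow> nat \<times> nat \<Rightarrow> real) \<Rightarrow> (nat \<times> nat \<Rightarrow> real) \<Rightarrow> (nat \<times> nat \<Rightarrow> real)" where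
  "Lmat I C w = (\<lambda>ij. if ij \<in> I then (\<Sum>kl\<in>I. w kl * C ij kl) else 0)"

lemma sn_contr_zero:
  assumes "finite I" "c < 1" "supnorm_on I w \<le> c * supnorm_on I w"
  shows "\<forall>ij\<in>I. w ij = 0"
proof -
  have "supnorm_on I w \<le> 0"
  proof (rule ccontr)
    assume "\<not> supnorm_on I w \<le> 0"
    then have "supnorm_on I w > 0" by simp
    then have "c * supnorm_on I w < 1 * supnorm_on I w" using assms(2) by (intro mult_strict_right_mono) auto
    then show False using assms(3) by simp
  qed
  then show ?thesis using sn_zero[OF assms(1)] by blast
qed

context
  fixes I :: "(nat \<times> nat) set" and C :: "nat \<times> nat \<Rightarrow> nat \<times> nat \<Rightarrow> real" and c :: real
  assumes fin: "finite I" and c1: "c < 1" and c0: "0 \<le> c"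
    and contr: "\<forall>w. supnorm_on I (Lmat I C w) \<le> c * supnorm_on I w"
begin

lemma L_out: "ij \<notin> I \<Longrightarrow> Lmat I C w ij = 0"
  by (simp add: Lmat_def)

lemma L_in: "ij \<in> I \<Longrightarrow> Lmat I C w ij = (\<Sum>kl\<in>I. w kl * C ij kl)"
  by (simp add: Lmat_def)

lemma L_lin: "ij \<in> I \<Longrightarrow> Lmat I C (\<lambda>kl. a * w1 kl + b * w2 kl) ij = a * Lmat I C w1 ij + b * Lmat I C w2 ij"
  by (simp add: Lmat_def sum.distrib sum_distrib_left algebra_simps)

lemma L_unique:
  assumes "\<forall>ij. ij \<notin> I \<longrightarrow> u1 ij = 0" "\<forall>ij\<in>I. u1 ij = v ij + Lmat I C u1 ij"
    and "\<forall>ij. ij \<notin> I \<longrightarrow> u2 ij = 0" "\<forall>ij\<in>I. u2 ij = v ij + Lmat I C u2 ij"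
  shows "u1 = u2"
proof -
  define d where "d = (\<lambda>kl. 1 * u1 kl + (-1) * u2 kl)"
  have "\<forall>ij\<in>I. d ij = Lmat I C d ij"
    using assms(2,4) L_lin[of _ 1 u1 "-1" u2] by (simp add: d_def)
  then have "supnorm_on I d = supnorm_on I (Lmat I C d)" by (intro sn_cong) auto
  then have "supnorm_on I d \<le> c * supnorm_on I d" using contr[rule_format, of d] by linarith
  then have "\<forall>ij\<in>I. d ij = 0" by (rule sn_contr_zero[OF fin c1])
  then show ?thesis using assms(1,3) by (auto simp: d_def fun_eq_iff)
qed

lemma L_exists:
  assumes v0: "\<forall>ij. ij \<notin> I \<longrightarrow> v ij = 0"
  shows "\<exists>u. (\<forall>ij. ij \<notin> I \<longrightarrow> u ij = 0) \<and> (\<forall>ij\<in>I. u ij = v ij + Lmat I C u ij)"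
proof -
  define P where "P n = ((Lmat I C) ^^ n) v" for n
  have P0: "P 0 = v" and PS: "P (Suc n) = Lmat I C (P n)" for n by (simp_all add: P_def)
  have Pout: "P n ij = 0" if "ij \<notin> I" for n ij
  proof (cases n)
    case 0 then show ?thesis using v0[rule_format, OF that] by (simp add: P0)
  next
    case (Suc k) then show ?thesis using that by (simp add: PS L_out)
  qed
  define K where "K = supnorm_on I v"
  have Pb: "supnorm_on I (P n) \<le> c ^ n * K" for n
  proof (induction n)
    case 0 then show ?case by (simp add: P0 K_def)
  next
    case (Suc n)
    have "supnorm_on I (P (Suc n)) \<le> c * supnorm_on I (P n)" using contr by (simp add: PS)
    also have "\<dots> \<le> c * (c ^ n * K)" using Suc c0 by (intro mult_left_mono) auto
    finally show ?case by simp
  qed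
  have Pij: "\<bar>P n ij\<bar> \<le> K * c ^ n" for n ij
  proof (cases "ij \<in> I")
    case True then show ?thesis using sn_ge[OF fin True, of "P n"] Pb[of n] by (simp add: mult.commute)
  next
    case False
    have "0 \<le> K" using sn_nonneg[OF fin] by (simp add: K_def)
    then show ?thesis using False Pout c0 by simp
  qed
  have summ: "summable (\<lambda>n. P n ij)" for ij
  proof (rule summable_comparison_test')
    show "summable (\<lambda>n. K * c ^ n)" using c0 c1 by (intro summable_mult summable_geometric) auto
    show "norm (P n ij) \<le> K * c ^ n" for n using Pij by simp
  qed
  define u where "u ij = (\<Sum>n. P n ij)" for ij
  have uout: "\<forall>ij. ij \<notin> I \<longrightarrow> u ij = 0" by (simp add: u_def Pout)
  have "u ij = v ij + Lmat I C u ij" if ij: "ij \<in> I" for ij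
  proof -
    have "Lmat I C u ij = (\<Sum>kl\<in>I. (\<Sum>n. P n kl) * C ij kl)" using ij by (simp add: L_in u_def)
    also have "\<dots> = (\<Sum>kl\<in>I. \<Sum>n. P n kl * C ij kl)"
      using summ by (intro sum.cong refl suminf_mult2)
    also have "\<dots> = (\<Sum>n. \<Sum>kl\<in>I. P n kl * C ij kl)"
      using summ by (intro suminf_sum[symmetric] summable_mult2)
    also have "\<dots> = (\<Sum>n. P (Suc n) ij)" using ij by (simp add: PS L_in)
    also have "\<dots> = u ij - P 0 ij" unfolding u_def by (rule suminf_split_head[OF summ])
    finally show ?thesis by (simp add: P0)
  qed
  then show ?thesis using uout by blast
qed

lemma L_maxprinc:
  assumes Cnn: "\<forall>ij\<in>I. \<forall>kl\<in>I. C ij kl \<ge> 0" and lam: "lam > 0"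
    and ueq: "\<forall>ij\<in>I. u ij = v ij + Lmat I C u ij"
    and veq: "\<forall>ij\<in>I. lam * v ij = q ij - Lmat I C (\<lambda>_. 1) ij"
    and q1: "\<forall>ij\<in>I. q ij \<le> 1"
  shows "\<forall>ij\<in>I. lam * u ij \<le> q ij"
    and "(\<forall>ij\<in>I. q ij = 1) \<Longrightarrow> \<forall>ij\<in>I. lam * u ij = q ij"
proof -
  define y where "y kl = lam * u kl + (-1) * 1" for kl
  have Ly: "Lmat I C y ij = lam * Lmat I C u ij - Lmat I C (\<lambda>_. 1) ij" if "ij \<in> I" for ij
    using L_lin[OF that, of lam u "-1" "\<lambda>_. 1"] by (simp add: y_def[abs_def])
  have star: "lam * u ij = q ij + Lmat I C y ij" if ij: "ij \<in> I" for ij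
  proof -
    have "lam * u ij = lam * v ij + lam * Lmat I C u ij" using ueq ij by (simp add: algebra_simps)
    also have "\<dots> = q ij + Lmat I C y ij" using veq ij Ly[OF ij] by simp
    finally show ?thesis .
  qed
  have yeq: "y ij = (q ij - 1) + Lmat I C y ij" if "ij \<in> I" for ij
    using star[OF that] by (simp add: y_def)
  define yp where "yp kl = max (y kl) 0" for kl
  define m where "m = supnorm_on I yp"
  have m0: "m \<ge> 0" using sn_nonneg[OF fin] by (simp add: m_def)
  have mono: "Lmat I C y ij \<le> Lmat I C yp ij" if "ij \<in> I" for ij
    using that Cnn by (simp add: L_in yp_def, intro sum_mono mult_right_mono) auto
  have "\<forall>ij\<in>I. \<bar>yp ij\<bar> \<le> c * m"
  proof
    fix ij assume ij: "ij \<in> I"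
    have "Lmat I C yp ij \<le> \<bar>Lmat I C yp ij\<bar>" by simp
    also have "\<dots> \<le> supnorm_on I (Lmat I C yp)" by (rule sn_ge[OF fin ij])
    also have "\<dots> \<le> c * m" using contr by (simp add: m_def)
    finally have "y ij \<le> c * m" using yeq[OF ij] mono[OF ij] q1 ij by fastforce
    moreover have "0 \<le> c * m" using c0 m0 by simp
    ultimately show "\<bar>yp ij\<bar> \<le> c * m" by (simp add: yp_def)
  qed
  then have "m \<le> c * m" unfolding m_def using c0 m0 by (intro sn_le[OF fin]) (auto simp: m_def)
  then have "\<forall>ij\<in>I. yp ij = 0" unfolding m_def by (rule sn_contr_zero[OF fin c1])
  then have yle: "\<forall>ij\<in>I. y ij \<le> 0" by (auto simp: yp_def max_def split: if_splits)
  have "Lmat I C y ij \<le> 0" if "ij \<in> I" for ij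
    using that Cnn yle by (simp add: L_in, intro sum_nonpos mult_nonpos_nonneg) auto
  then show "\<forall>ij\<in>I. lam * u ij \<le> q ij" using star by fastforce
  assume qq: "\<forall>ij\<in>I. q ij = 1"
  then have "\<forall>ij\<in>I. y ij = Lmat I C y ij" using yeq by simp
  then have "supnorm_on I y = supnorm_on I (Lmat I C y)" by (intro sn_cong) auto
  then have "supnorm_on I y \<le> c * supnorm_on I y" using contr[rule_format, of y] by linarith
  then have "\<forall>ij\<in>I. y ij = 0" by (rule sn_contr_zero[OF fin c1])
  then show "\<forall>ij\<in>I. lam * u ij = q ij" using qq by (simp add: y_def)
qed

end



lemma DC_gen:
  fixes S :: "'a::metric_space set"
  assumes "feller_generator S A D" "f \<in> D" shows "f \<in> Cfun S"
proof -
  obtain T where fs: "feller_semigroup S T" and gen: "generates S T A D"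
    using assms(1) unfolding feller_generator_def by blast
  show ?thesis using D_Cfun[OF fs gen assms(2)] .
qed

lemma resolvent_sum:
  fixes S :: "'a::metric_space set"
  assumes "compact S" "feller_generator S A D" "lam > 0" "finite J"
    and "\<forall>j\<in>J. \<phi> j \<in> Cfun S"
    and "(\<lambda>x. \<Sum>j\<in>J. \<phi> j x) = \<psi>"
  shows "resolvent A D lam \<psi> = (\<lambda>x. \<Sum>j\<in>J. resolvent A D lam (\<phi> j) x)"
proof -
  obtain T where fs: "feller_semigroup S T" and gen: "generates S T A D"
    using assms(2) unfolding feller_generator_def by blast
  define r where "r j = resolvent A D lam (\<phi> j)" for j
  have rP: "r j \<in> D \<and> (\<lambda>x. lam * r j x - A (r j) x) = \<phi> j" if "j \<in> J" for j
    unfolding r_def using resolvent_props[OF assms(1,2,3)] assms(5) that by blast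
  have sD: "(\<lambda>x. \<Sum>j\<in>J. r j x) \<in> D \<and> A (\<lambda>x. \<Sum>j\<in>J. r j x) = (\<lambda>x. \<Sum>j\<in>J. A (r j) x)"
    using D_sum[OF fs gen assms(4)] rP by blast
  have "(\<lambda>x. lam * (\<Sum>j\<in>J. r j x) - A (\<lambda>x. \<Sum>j\<in>J. r j x) x) = \<psi>"
  proof
    fix x
    have "lam * (\<Sum>j\<in>J. r j x) - A (\<lambda>x. \<Sum>j\<in>J. r j x) x = (\<Sum>j\<in>J. lam * r j x - A (r j) x)"
      using sD by (simp add: sum_distrib_left sum_subtractf)
    also have "\<dots> = (\<Sum>j\<in>J. \<phi> j x)"
      using rP by (intro sum.cong) (auto dest: fun_cong[of _ _ x])
    also have "\<dots> = \<psi> x" using assms(6) by (auto dest: fun_cong[of _ _ x])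
    finally show "lam * (\<Sum>j\<in>J. r j x) - A (\<lambda>x. \<Sum>j\<in>J. r j x) x = \<psi> x" .
  qed
  then show ?thesis using resolvent_eq[OF fs gen assms(1,3)] sD by (simp add: r_def)
qed

theorem lemma3:
  fixes S :: "nat \<Rightarrow> 'a::metric_space set"
    and A :: "nat \<Rightarrow> ('a \<Rightarrow> real) \<Rightarrow> ('a \<Rightarrow> real)"
    and D :: "nat \<Rightarrow> ('a \<Rightarrow> real) set"
    and Nn M :: nat and \<kappa> :: "nat \<Rightarrow> nat"
    and \<phi> :: "nat \<Rightarrow> nat \<Rightarrow> 'a \<Rightarrow> real"
    and p :: "nat \<times> nat \<Rightarrow> 'a measure"
    and lam :: real
  assumes "1 \<le> M" and "M \<le> Nn"
    and "\<forall>i\<in>{1..Nn}. compact (S i)"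
    and "\<forall>i\<in>{1..Nn}. \<forall>k\<in>{1..Nn}. i \<noteq> k \<longrightarrow> S i \<inter> S k = {}"
    and "\<forall>i\<in>{1..Nn}. feller_generator (S i) (A i) (D i)"
    and "\<forall>i\<in>{1..M}. \<not> conservative_generator (S i) (A i) (D i)"
    and "\<forall>i\<in>{M<..Nn}. conservative_generator (S i) (A i) (D i)"
    and "\<forall>i\<in>{1..M}. \<forall>f\<in>D i. A i f = (\<lambda>x. 0) \<longrightarrow> f = (\<lambda>x. 0)"
    and "\<forall>(i, j)\<in>IJ M \<kappa>. \<phi> i j \<in> Cfun (S i) \<and> (\<forall>x\<in>S i. 0 \<le> \<phi> i j x \<and> \<phi> i j x \<le> 1)"
    and "\<forall>(i, j)\<in>IJ M \<kappa>. \<forall>l>0. \<forall>x\<in>S i. l * resolvent (A i) (D i) l (\<phi> i j) x \<le> \<phi> i j x"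
    and "\<forall>(i, j)\<in>IJ M \<kappa>. \<forall>l>0. (\<lambda>x. l * resolvent (A i) (D i) l (\<phi> i j) x) \<noteq> \<phi> i j"
    and "\<forall>i\<in>{1..M}. (\<lambda>x. \<Sum>j\<in>{1..\<kappa> i}. \<phi> i j x) = indicator (S i)"
    and "\<forall>ij\<in>IJ M \<kappa>. sets (p ij) = sets (restrict_space borel (\<Union>i\<in>{1..Nn}. S i))
            \<and> emeasure (p ij) (space (p ij)) \<le> 1"
    and "\<forall>l>0. \<exists>c<1. \<forall>w. supnorm_on (IJ M \<kappa>) (Nop S A D M \<kappa> \<phi> p l w) \<le> c * supnorm_on (IJ M \<kappa>) w"
    and "lam > 0"
  shows "(\<forall>ij\<in>IJ M \<kappa>. lam * uvec S A D Nn M \<kappa> \<phi> p (indicator (\<Union>i\<in>{1..Nn}. S i)) lam ij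
              \<le> measure (p ij) (\<Union>i\<in>{1..Nn}. S i))
       \<and> ((\<forall>ij\<in>IJ M \<kappa>. measure (p ij) (\<Union>i\<in>{1..Nn}. S i) = 1) \<longrightarrow>
          (\<forall>ij\<in>IJ M \<kappa>. lam * uvec S A D Nn M \<kappa> \<phi> p (indicator (\<Union>i\<in>{1..Nn}. S i)) lam ij
              = measure (p ij) (\<Union>i\<in>{1..Nn}. S i)))"
proof -
  note cpt = assms(3) and disj = assms(4) and fg = assms(5) and cons = assms(7)
    and phiP = assms(9) and Rle = assms(10) and phisum = assms(12) and pP = assms(13)
    and contrN = assms(14) and lam = assms(15)
  define U where "U = (\<Union>i\<in>{1..Nn}. S i)"
  define I where "I = IJ M \<kappa>"
  have I_Sigma: "I = Sigma {1..M} (\<lambda>i. {1..\<kappa> i})" by (auto simp: I_def IJ_def)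
  have finI: "finite I" unfolding I_Sigma by auto
  have Imem: "(k, l) \<in> I \<longleftrightarrow> k \<in> {1..M} \<and> l \<in> {1..\<kappa> k}" for k l by (simp add: I_Sigma)
  have kN: "k \<in> {1..Nn}" if "k \<in> {1..M}" for k using that assms(2) by auto
  have kN': "k \<in> {1..Nn}" if "(k, l) \<in> I" for k l using that kN Imem by blast
  have phiC: "\<phi> k l \<in> Cfun (S k)" if "(k, l) \<in> I" for k l using phiP that by (auto simp: I_def)
  define rr where "rr k l = resolvent (A k) (D k) lam (\<phi> k l)" for k l
  have rrP: "rr k l \<in> D k \<and> (\<lambda>x. lam * rr k l x - A k (rr k l) x) = \<phi> k l" if "(k, l) \<in> I" for k l
    unfolding rr_def using resolvent_props[OF _ _ lam phiC[OF that]] cpt fg kN'[OF that] by blast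
  have rrC: "rr k l \<in> Cfun (S k)" if "(k, l) \<in> I" for k l
    using DC_gen[of "S k" "A k" "D k"] fg kN'[OF that] rrP[OF that] by blast
  define el where "el k l = ell A D \<phi> k l lam" for k l
  have el_eq: "el k l = (\<lambda>x. \<phi> k l x - lam * rr k l x)" for k l
    by (simp add: el_def ell_def rr_def)
  have elC: "el k l \<in> Cfun (S k)" if "(k, l) \<in> I" for k l
    using Cfun_lin[OF phiC[OF that] rrC[OF that], of 1 "-lam"] by (simp add: el_eq)
  have el_out: "el k l x = 0" if "(k, l) \<in> I" "x \<notin> S k" for k l x
    using elC[OF that(1)] that(2) by (simp add: Cfun_def)
  have el_nn: "0 \<le> el k l x" if "(k, l) \<in> I" for k l x
  proof (cases "x \<in> S k")
    case True
    then show ?thesis using Rle lam that by (auto simp: el_eq rr_def I_def)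
  next
    case False then show ?thesis using el_out[OF that False] by simp
  qed
  have Rnc: "resolvent (A i) (D i) lam (indicator (S i)) = (\<lambda>x. \<Sum>j\<in>{1..\<kappa> i}. rr i j x)"
    if "i \<in> {1..M}" for i
    unfolding rr_def
    using resolvent_sum[of "S i" "A i" "D i" lam "{1..\<kappa> i}" "\<phi> i" "indicator (S i)"]
      cpt fg kN[OF that] lam phisum that phiC Imem by auto
  have Rc: "resolvent (A i) (D i) lam (indicator (S i)) = (\<lambda>x. (1/lam) * indicator (S i) x)"
    if "i \<in> {M<..Nn}" for i
    using resolvent_conservative[OF _ lam, of "S i" "A i" "D i"] cpt cons that by auto
  have Rdu_eq: "Rdu S A D Nn lam (indicator U) = (\<lambda>x. \<Sum>i\<in>{1..Nn}. resolvent (A i) (D i) lam (indicator (S i)) x)"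
  proof -
    have "(\<lambda>y. indicator (S i) y * indicator U y) = (indicator (S i) :: 'a \<Rightarrow> real)" if "i \<in> {1..Nn}" for i
      using that by (auto simp: U_def indicator_def fun_eq_iff)
    then show ?thesis unfolding Rdu_def by (intro ext sum.cong) auto
  qed
  have split: "{1..Nn} = {1..M} \<union> {M<..Nn}" "{1..M} \<inter> {M<..Nn} = {}" using assms(2) by auto
  have indU: "indicator U x = (\<Sum>i\<in>{1..Nn}. indicator (S i) x :: real)" for x
  proof -
    have "disjoint_family_on S {1..Nn}" using disj by (auto simp: disjoint_family_on_def)
    then show ?thesis unfolding U_def by (rule indicator_UN_disjoint[OF finite_atLeastAtMost])
  qed
  define EL where "EL x = (\<Sum>k\<in>{1..M}. \<Sum>l\<in>{1..\<kappa> k}. el k l x)" for x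
  have lamRdu: "lam * Rdu S A D Nn lam (indicator U) x = indicator U x - EL x" for x
  proof -
    have a: "lam * (\<Sum>j\<in>{1..\<kappa> i}. rr i j x) = indicator (S i) x - (\<Sum>j\<in>{1..\<kappa> i}. el i j x)"
      if "i \<in> {1..M}" for i
    proof -
      have "lam * (\<Sum>j\<in>{1..\<kappa> i}. rr i j x) = (\<Sum>j\<in>{1..\<kappa> i}. \<phi> i j x - el i j x)"
        by (simp add: sum_distrib_left el_eq)
      also have "\<dots> = (\<Sum>j\<in>{1..\<kappa> i}. \<phi> i j x) - (\<Sum>j\<in>{1..\<kappa> i}. el i j x)"
        by (simp add: sum_subtractf)
      also have "(\<Sum>j\<in>{1..\<kappa> i}. \<phi> i j x) = indicator (S i) x"
        using phisum that by (auto dest: fun_cong[of _ _ x])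
      finally show ?thesis .
    qed
    have b: "lam * ((1/lam) * indicator (S i) x) = indicator (S i) x" for i :: nat
      using lam by simp
    have "lam * Rdu S A D Nn lam (indicator U) x
        = lam * ((\<Sum>i\<in>{1..M}. resolvent (A i) (D i) lam (indicator (S i)) x)
           + (\<Sum>i\<in>{M<..Nn}. resolvent (A i) (D i) lam (indicator (S i)) x))"
      unfolding Rdu_eq split(1) by (subst sum.union_disjoint) (use split(2) in auto)
    also have "\<dots> = (\<Sum>i\<in>{1..M}. lam * (\<Sum>j\<in>{1..\<kappa> i}. rr i j x))
           + (\<Sum>i\<in>{M<..Nn}. lam * ((1/lam) * indicator (S i) x))"
      using Rnc Rc by (simp add: distrib_left sum_distrib_left)
    also have "\<dots> = (\<Sum>i\<in>{1..M}. indicator (S i) x - (\<Sum>j\<in>{1..\<kappa> i}. el i j x))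
           + (\<Sum>i\<in>{M<..Nn}. indicator (S i) x)"
      using a b by simp
    also have "\<dots> = ((\<Sum>i\<in>{1..M}. indicator (S i) x) + (\<Sum>i\<in>{M<..Nn}. indicator (S i) x)) - EL x"
      by (simp add: sum_subtractf EL_def)
    also have "(\<Sum>i\<in>{1..M}. indicator (S i) x) + (\<Sum>i\<in>{M<..Nn}. indicator (S i) x) = (\<Sum>i\<in>{1..Nn}. indicator (S i) x :: real)"
      unfolding split(1) by (subst sum.union_disjoint) (use split(2) in auto)
    finally have X: "lam * Rdu S A D Nn lam (indicator U) x = (\<Sum>i\<in>{1..Nn}. indicator (S i) x) - EL x" .
    show ?thesis unfolding X using indU[of x] by linarith
  qed
  have spU: "space (p ij) = U" if "ij \<in> I" for ij
    using pP that sets_eq_imp_space_eq[of "p ij" "restrict_space borel U"] by (auto simp: I_def U_def space_restrict_space)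
  have setsp: "sets (p ij) = sets (restrict_space borel U)" if "ij \<in> I" for ij
    using pP that by (auto simp: I_def U_def)
  have fm: "finite_measure (p ij)" if "ij \<in> I" for ij
  proof (rule finite_measureI)
    have "emeasure (p ij) (space (p ij)) \<le> 1" using pP that by (auto simp: I_def)
    then show "emeasure (p ij) (space (p ij)) \<noteq> \<infinity>" by (auto simp: top_unique)
  qed
  have el_meas: "el k l \<in> borel_measurable (p ij)" if "ij \<in> I" "(k, l) \<in> I" for ij k l
  proof -
    have "compact (S k)" using cpt kN'[OF that(2)] by blast
    then have Sk: "S k \<in> sets borel" by (intro borel_closed compact_imp_closed)
    have "el k l = (\<lambda>x. indicator (S k) x *\<^sub>R el k l x)"
      using el_out[OF that(2)] by (auto simp: fun_eq_iff indicator_def)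
    also have "\<dots> \<in> borel_measurable borel"
      using elC[OF that(2)] by (intro borel_measurable_continuous_on_indicator[OF Sk]) (auto simp: Cfun_def)
    finally have m: "el k l \<in> borel_measurable (restrict_space borel U)"
      by (rule measurable_restrict_space1)
    have "(borel_measurable (p ij) :: ('a \<Rightarrow> real) set) = borel_measurable (restrict_space borel U)"
      by (rule measurable_cong_sets[OF setsp[OF that(1)] refl])
    then show ?thesis using m by simp
  qed
  have el_int: "integrable (p ij) (el k l)" if ijI: "ij \<in> I" and klI: "(k, l) \<in> I" for ij k l
  proof -
    obtain B where B: "B \<ge> 0" "\<forall>x. \<bar>el k l x\<bar> \<le> B"
      using Cfun_bounded[OF _ elC[OF klI]] cpt kN'[OF klI] by blast
    show ?thesis
      using finite_measure.integrable_const_bound[OF fm[OF ijI], of "el k l" B] B el_meas[OF ijI klI] by auto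
  qed
  have Uin: "U \<in> sets (p ij)" if "ij \<in> I" for ij
    using sets.top[of "p ij"] spU[OF that] by simp
  have ind_int: "integrable (p ij) (indicator U :: 'a \<Rightarrow> real)" if "ij \<in> I" for ij
  proof (rule integrable_real_indicator[OF Uin[OF that]])
    show "emeasure (p ij) U < \<infinity>"
      using finite_measure.emeasure_finite[OF fm[OF that], of U] by (simp add: less_top)
  qed
  have setint: "(LINT x:S k|p ij. el k l x) = integral\<^sup>L (p ij) (el k l)" if "(k, l) \<in> I" for ij k l
  proof -
    have "(\<lambda>x. indicator (S k) x *\<^sub>R el k l x) = el k l"
      using el_out[OF that] by (auto simp: indicator_def fun_eq_iff)
    then show ?thesis unfolding set_lebesgue_integral_def el_def by simp
  qed
  define Cc where "Cc ij kl = integral\<^sup>L (p ij) (el (fst kl) (snd kl))" for ij kl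
  have Nop_eq: "Nop S A D M \<kappa> \<phi> p lam w = Lmat I Cc w" for w
  proof
    fix ij
    show "Nop S A D M \<kappa> \<phi> p lam w ij = Lmat I Cc w ij"
    proof (cases "ij \<in> I")
      case True
      have "(\<Sum>k\<in>{1..M}. \<Sum>l\<in>{1..\<kappa> k}. w (k, l) * (LINT x:S k|p ij. ell A D \<phi> k l lam x))
          = (\<Sum>k\<in>{1..M}. \<Sum>l\<in>{1..\<kappa> k}. w (k, l) * Cc ij (k, l))"
        using setint Imem by (intro sum.cong refl) (auto simp: Cc_def el_def)
      also have "\<dots> = (\<Sum>kl\<in>I. w kl * Cc ij kl)"
        unfolding I_Sigma by (subst sum.Sigma) (auto simp: case_prod_beta)
      finally show ?thesis using True by (simp add: Nop_def Lmat_def I_def)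
    next
      case False then show ?thesis by (simp add: Nop_def Lmat_def I_def)
    qed
  qed
  obtain c where c: "c < 1" "\<forall>w. supnorm_on I (Nop S A D M \<kappa> \<phi> p lam w) \<le> c * supnorm_on I w"
    using contrN lam by (auto simp: I_def)
  define c0 where "c0 = max c 0"
  have c0: "c0 < 1" "0 \<le> c0" using c by (auto simp: c0_def)
  have contrL: "\<forall>w. supnorm_on I (Lmat I Cc w) \<le> c0 * supnorm_on I w"
  proof
    fix w
    have "c * supnorm_on I w \<le> c0 * supnorm_on I w"
      using sn_nonneg[OF finI, of w] by (intro mult_right_mono) (auto simp: c0_def)
    then show "supnorm_on I (Lmat I Cc w) \<le> c0 * supnorm_on I w" using c(2) Nop_eq by (metis order_trans)
  qed
  define v where "v = vvec S A D Nn M \<kappa> p (indicator U) lam"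
  have v0: "\<forall>ij. ij \<notin> I \<longrightarrow> v ij = 0" by (simp add: v_def vvec_def I_def)
  define q where "q ij = measure (p ij) U" for ij
  have veq: "\<forall>ij\<in>I. lam * v ij = q ij - Lmat I Cc (\<lambda>_. 1) ij"
  proof
    fix ij assume ij: "ij \<in> I"
    have intEL: "integrable (p ij) EL"
      unfolding EL_def by (intro Bochner_Integration.integrable_sum) (use el_int[OF ij] Imem in auto)
    have "lam * v ij = lam * integral\<^sup>L (p ij) (Rdu S A D Nn lam (indicator U))"
      using ij by (simp add: v_def vvec_def I_def)
    also have "\<dots> = integral\<^sup>L (p ij) (\<lambda>x. lam * Rdu S A D Nn lam (indicator U) x)"
      by simp
    also have "\<dots> = integral\<^sup>L (p ij) (\<lambda>x. indicator U x - EL x)"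
      using lamRdu by simp
    also have "\<dots> = integral\<^sup>L (p ij) (indicator U) - integral\<^sup>L (p ij) EL"
      using ind_int[OF ij] intEL by (rule Bochner_Integration.integral_diff)
    also have "integral\<^sup>L (p ij) (indicator U) = q ij"
      using spU[OF ij] by (simp add: q_def)
    also have "integral\<^sup>L (p ij) EL = (\<Sum>k\<in>{1..M}. \<Sum>l\<in>{1..\<kappa> k}. integral\<^sup>L (p ij) (el k l))"
    proof -
      have inner: "integrable (p ij) (\<lambda>x. \<Sum>l\<in>{1..\<kappa> k}. el k l x)" if "k \<in> {1..M}" for k
        by (intro Bochner_Integration.integrable_sum) (use el_int[OF ij] Imem that in auto)
      have "integral\<^sup>L (p ij) EL = (\<Sum>k\<in>{1..M}. integral\<^sup>L (p ij) (\<lambda>x. \<Sum>l\<in>{1..\<kappa> k}. el k l x))"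
        unfolding EL_def by (rule Bochner_Integration.integral_sum) (use inner in auto)
      also have "\<dots> = (\<Sum>k\<in>{1..M}. \<Sum>l\<in>{1..\<kappa> k}. integral\<^sup>L (p ij) (el k l))"
      proof (rule sum.cong[OF refl])
        fix k assume k: "k \<in> {1..M}"
        show "integral\<^sup>L (p ij) (\<lambda>x. \<Sum>l\<in>{1..\<kappa> k}. el k l x) = (\<Sum>l\<in>{1..\<kappa> k}. integral\<^sup>L (p ij) (el k l))"
          by (rule Bochner_Integration.integral_sum) (use el_int[OF ij] Imem k in auto)
      qed
      finally show ?thesis .
    qed
    also have "\<dots> = (\<Sum>kl\<in>I. 1 * Cc ij kl)"
      unfolding I_Sigma by (subst sum.Sigma) (auto simp: case_prod_beta Cc_def)
    also have "\<dots> = Lmat I Cc (\<lambda>_. 1) ij" using ij by (simp add: Lmat_def)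
    finally show "lam * v ij = q ij - Lmat I Cc (\<lambda>_. 1) ij" .
  qed
  have q1: "\<forall>ij\<in>I. q ij \<le> 1"
  proof
    fix ij assume ij: "ij \<in> I"
    have "emeasure (p ij) U \<le> ennreal 1" using pP ij spU[OF ij] by (auto simp: I_def)
    then show "q ij \<le> 1" unfolding q_def measure_def by (intro enn2real_leI) auto
  qed
  have Cnn: "\<forall>ij\<in>I. \<forall>kl\<in>I. Cc ij kl \<ge> 0"
    using el_nn by (auto simp: Cc_def intro!: integral_nonneg_AE)
  obtain u0 where u0: "\<forall>ij. ij \<notin> I \<longrightarrow> u0 ij = 0" "\<forall>ij\<in>I. u0 ij = v ij + Lmat I Cc u0 ij"
    using L_exists[OF finI c0 contrL v0] by blast
  have uvec_eq: "uvec S A D Nn M \<kappa> \<phi> p (indicator U) lam = u0"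
    unfolding uvec_def
  proof (rule the_equality)
    show "(\<forall>ij. ij \<notin> IJ M \<kappa> \<longrightarrow> u0 ij = 0) \<and>
      (\<forall>ij\<in>IJ M \<kappa>. u0 ij = vvec S A D Nn M \<kappa> p (indicator U) lam ij + Nop S A D M \<kappa> \<phi> p lam u0 ij)"
      using u0 by (simp add: Nop_eq I_def v_def)
    fix u assume u: "(\<forall>ij. ij \<notin> IJ M \<kappa> \<longrightarrow> u ij = 0) \<and>
      (\<forall>ij\<in>IJ M \<kappa>. u ij = vvec S A D Nn M \<kappa> p (indicator U) lam ij + Nop S A D M \<kappa> \<phi> p lam u ij)"
    show "u = u0"
      using L_unique[OF finI c0 contrL, of u v u0] u u0 by (simp add: Nop_eq I_def v_def)
  qed
  have res1: "\<forall>ij\<in>I. lam * u0 ij \<le> q ij"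
    using L_maxprinc(1)[OF finI c0 contrL Cnn lam u0(2) veq q1] .
  have res2: "(\<forall>ij\<in>I. q ij = 1) \<Longrightarrow> \<forall>ij\<in>I. lam * u0 ij = q ij"
    using L_maxprinc(2)[OF finI c0 contrL Cnn lam u0(2) veq q1] .
  show ?thesis unfolding U_def[symmetric] I_def[symmetric] using res1 res2 uvec_eq by (simp add: q_def)
qed


end
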